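(* There exists a large set with multiplicity LS$(3,4,14;720)$.
   Context: A Steiner system S$(t,k,n)$ is a pair $(Q,B)$ where $Q$ is an $n$-set and $B$ is a collection of $k$-subsets (blocks) of $Q$ such that every $t$-subset of $Q$ is contained in exactly one block. A large set with multiplicity $\mu$, LS$(t,k,n;\mu)$, is a family (the same system may occur more than once) of Steiner systems S$(t,k,n)$ on a common $n$-set $Q$ such that every $k$-subset of $Q$ is a block of exactly $\mu$ of the systems. *)

theory Defs
  imports Main "HOL-Library.Multiset"
begin

definition steiner_system :: "nat \<Rightarrow> nat \<Rightarrow> 'a set \<Rightarrow> 'a set set \<Rightarrow> bool" where
  "steiner_system t k Q B \<longleftrightarrow>
     finite Q \<and>
     (\<forall>b\<in>B. b \<subseteq> Q \<and> card b = k) \<and>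
     (\<forall>T. T \<subseteq> Q \<and> card T = t \<longrightarrow> (\<exists>!b. b \<in> B \<and> T \<subseteq> b))"

definition large_set_mult ::
    "nat \<Rightarrow> nat \<Rightarrow> nat \<Rightarrow> nat \<Rightarrow> 'a set \<Rightarrow> 'a set set multiset \<Rightarrow> bool" where
  "large_set_mult t k n \<mu> Q F \<longleftrightarrow>
     finite Q \<and> card Q = n \<and>
     (\<forall>B\<in>#F. steiner_system t k Q B) \<and>
     (\<forall>K. K \<subseteq> Q \<and> card K = k \<longrightarrow> size (filter_mset (\<lambda>B. K \<in> B) F) = \<mu>)"

end

theory Submission
  imports Defs "HOL-Combinatorics.Permutations"
begin

definition FRZ :: "'a list \<Rightarrow> 'a list" where "FRZ xs = xs"

lemma FRZ_cong [cong]: "FRZ xs = FRZ xs" by (rule refl)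

definition BL0 :: "nat list list" where
  "BL0 = [[0,1,2,5], [0,1,3,8], [0,1,4,6], [0,1,7,13], [0,1,9,12], [0,1,10,11], [0,2,3,4], [0,2,6,7], [0,2,8,13], [0,2,9,11], [0,2,10,12], [0,3,5,6], [0,3,7,10], [0,3,9,13], [0,3,11,12], [0,4,5,12], [0,4,7,11], [0,4,8,9], [0,4,10,13], [0,5,7,9], [0,5,8,10], [0,5,11,13], [0,6,8,11], [0,6,9,10], [0,6,12,13], [0,7,8,12], [1,2,3,6], [1,2,4,9], [1,2,7,8], [1,2,10,13], [1,2,11,12], [1,3,4,5], [1,3,7,9], [1,3,10,12], [1,3,11,13], [1,4,7,10], [1,4,8,11], [1,4,12,13], [1,5,6,13], [1,5,7,11], [1,5,8,12], [1,5,9,10], [1,6,7,12], [1,6,8,10], [1,6,9,11], [1,8,9,13], [2,3,5,10], [2,3,7,11], [2,3,8,9], [2,3,12,13], [2,4,5,6], [2,4,7,12], [2,4,8,10], [2,4,11,13], [2,5,7,13], [2,5,8,11], [2,5,9,12], [2,6,8,12], [2,6,9,13], [2,6,10,11], [2,7,9,10], [3,4,6,11], [3,4,7,13], [3,4,8,12], [3,4,9,10], [3,5,7,12], [3,5,8,13], [3,5,9,11], [3,6,7,8], [3,6,9,12], [3,6,10,13], [3,8,10,11], [4,5,7,8], [4,5,9,13], [4,5,10,11], [4,6,7,9], [4,6,8,13], [4,6,10,12], [4,9,11,12], [5,6,7,10], [5,6,8,9], [5,6,11,12], [5,10,12,13], [6,7,11,13], [7,8,9,11], [7,8,10,13], [7,9,12,13],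 [7,10,11,12], [8,9,10,12], [8,11,12,13], [9,10,11,13]]"

definition PL :: "nat list list" where
  "PL = [[6,8,7,4,11,5,3,12,10,13,1,0,2,9],
  [11,7,8,13,4,1,2,12,3,10,5,9,6,0],
  [4,8,3,10,0,7,11,12,2,5,6,1,13,9],
  [6,7,10,3,5,4,0,13,12,11,1,9,8,2],
  [8,9,1,7,6,12,0,11,13,2,5,3,10,4],
  [11,1,5,12,7,10,0,4,6,13,3,8,9,2],
  [13,8,12,10,2,9,7,4,5,1,3,11,6,0],
  [8,5,13,0,1,4,12,10,11,9,3,2,7,6],
  [10,2,9,4,0,8,5,11,1,3,7,6,13,12],
  [3,6,4,1,10,8,2,11,12,5,13,9,0,7],
  [12,4,2,5,9,13,1,11,10,0,6,3,7,8]]"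

definition KJ :: "nat list list" where
  "KJ = [FRZ [717,68,67,7,66,586,716,715,79,712,6428,5638,614,68,5536,624,64,7,65,69,623,622,604,605,606,66,697,8,8,74,676,59,5,434,46,2,1,3,58,55,57,56,39,38,37,0,6365,694,77,696,706,75,74,73,78,703,705,687,76,6175,74,442,5,48,47,534,59,532,49,444,443,424,6,6,505,4,4,353,28,524,58,4726,515,37,1,2,3,262,29,28,19],
  FRZ [74,76,696,73,79,78,5,3,37,0,69,29,6,1,7,614,5,49,532,2,524,19,39,57,595,67,75,77,76,703,79,695,8,717,73,707,697,6445,6094,74,6437,704,714,6357,75,685,56,0,4,64,434,68,535,46,19,38,65,606,28,57,6,48,46,616,59,65,343,2,39,66,514,58,443,424,533,48,3997,5637,68,515,353,596,5608,28,4,523,64,69,625,604,55],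
  FRZ [697,48,46,5,59,614,442,49,444,4817,616,77,68,59,47,694,424,4807,613,707,6447,695,434,626,5,48,4,523,39,67,38,73,6,7,2,64,262,1,8,74,75,717,0,66,56,57,715,38,525,4,685,37,5455,343,76,6185,706,39,58,605,625,19,1,28,622,8,75,704,3,6,7,596,676,703,6418,55,28,64,505,79,705,74,79,2,515,66,6,65,624,29,623],
  FRZ [716,715,6454,714,79,713,625,64,66,7,65,5545,605,606,67,626,69,69,5618,68,614,615,64,586,595,7,685,78,8,677,8,6367,76,686,687,704,78,705,6265,77,77,695,73,667,73,75,443,4,4,39,532,6,56,57,48,5,5,1,28,19,2,523,525,58,524,49,444,49,37,37,3178,38,59,534,533,55,514,505,6,424,46,46,434,28,0,29,3,2,2,3,29],
  FRZ [2,8,64,5,3,58,713,19,47,353,56,73,78,696,76,7,67,66,626,3,6,49,37,514,46,0,667,596,2,533,38,79,75,78,697,69,67,68,46,4,0,57,1,55,352,48,704,686,677,695,586,65,623,5546,47,38,29,19,3907,4717,515,6436,716,79,6456,8,77,687,73,676,6364,706,7,615,625,595,613,622,606,55,28,37,59,442,39,59,48,58,57,49,4818],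
  FRZ [56,65,667,434,2,38,78,532,624,6,58,1,49,3,0,8,77,79,687,5,67,3,64,37,28,68,505,704,5636,4727,56,74,47,38,29,6275,713,677,262,47,65,38,424,5446,19,596,58,59,69,57,703,707,6457,705,534,69,6,622,514,523,535,73,696,79,76,5,66,0,613,1,352,67,716,75,76,694,6427,685,8,442,64,1,39,433,68,5547,48,49,67,66,39],
  FRZ [0,6,75,46,65,4,3,77,55,2,67,8,49,19,7,66,48,515,352,47,58,1,78,686,712,626,8,29,59,37,7,3,47,67,1,444,57,595,73,5,69,38,716,706,74,505,4,5,56,64,75,615,525,28,46,6,65,717,667,76,443,75,433,624,353,68,55,2,707,713,685,58,534,262,39,6266,6346,6438,596,697,704,79,604,694,533,4816,5527,616,5627,622,343],
  FRZ [59,55,56,69,78,525,19,0,7,3,76,46,37,64,676,695,29,2,605,5,49,615,3,4,79,8,55,56,6,625,705,4798,55,6355,5617,524,515,6455,626,534,707,535,78,58,57,69,442,28,1,712,47,74,38,596,68,48,77,8,7,39,4,262,586,667,343,694,613,433,1,73,604,352,47,614,3998,2,65,686,677,49,5,696,6448,66,3,67,79,687,76,714,606],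
  FRZ [3,434,514,3,39,714,46,6,2,67,8,59,77,49,68,1,64,343,73,4,74,7,623,706,6,2,534,352,29,75,66,433,444,696,615,676,5365,28,57,66,29,687,57,6347,5628,353,77,68,443,5,55,1,667,64,0,65,4,56,58,717,76,5635,46,424,6274,5,47,616,533,535,707,6446,19,37,712,523,505,703,604,78,524,69,8,69,605,74,4,79,686,65,715],
  FRZ [616,605,606,715,5626,67,443,444,697,535,442,353,38,6356,343,37,4,58,76,58,4,76,39,525,6184,37,5537,626,68,716,613,65,623,586,713,7,7,712,714,7,64,69,595,66,624,717,47,47,533,6256,48,46,5,77,77,5,532,433,6366,48,59,29,74,19,56,19,74,56,29,4636,677,2,0,78,0,57,75,28,55,3,57,28,73,75,6,8,703,1,55,73,78],
  FRZ [48,59,47,5,694,616,57,29,3,352,714,56,69,55,706,8,4,1,7,1,7,4,38,586,74,8,4808,433,48,615,6276,59,532,6458,535,68,49,77,47,49,77,613,695,614,3988,46,624,525,514,705,29,75,66,39,3,39,676,677,262,5456,595,524,6,78,622,78,6,523,56,6337,623,625,0,1,67,19,2,713,685,65,19,686,79,38,37,7,73,715,712,76,604]]"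

definition BK :: "nat list list list" where
  "BK = [FRZ [[0,1,2,5], [0,1,3,8], [0,1,4,6], [0,1,7,13], [0,1,9,12], [0,1,10,11], [0,2,3,4], [0,2,6,7], [0,2,8,13], [0,2,9,11], [0,2,10,12], [0,3,5,6], [0,3,7,10], [0,3,9,13], [0,3,11,12], [0,4,5,12], [0,4,7,11], [0,4,8,9], [0,4,10,13], [0,5,7,9], [0,5,8,10], [0,5,11,13], [0,6,8,11], [0,6,9,10], [0,6,12,13], [0,7,8,12]],
  FRZ [[0,1,2,5], [0,1,3,8], [0,1,4,6], [0,1,7,13], [0,1,9,12], [0,1,10,11], [1,2,3,6], [1,2,4,9], [1,2,7,8], [1,2,10,13], [1,2,11,12], [1,3,4,5], [1,3,7,9], [1,3,10,12], [1,3,11,13], [1,4,7,10], [1,4,8,11], [1,4,12,13], [1,5,6,13], [1,5,7,11], [1,5,8,12], [1,5,9,10], [1,6,7,12], [1,6,8,10], [1,6,9,11], [1,8,9,13]],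
  FRZ [[0,1,2,5], [0,2,3,4], [0,2,6,7], [0,2,8,13], [0,2,9,11], [0,2,10,12], [1,2,3,6], [1,2,4,9], [1,2,7,8], [1,2,10,13], [1,2,11,12], [2,3,5,10], [2,3,7,11], [2,3,8,9], [2,3,12,13], [2,4,5,6], [2,4,7,12], [2,4,8,10], [2,4,11,13], [2,5,7,13], [2,5,8,11], [2,5,9,12], [2,6,8,12], [2,6,9,13], [2,6,10,11], [2,7,9,10]],
  FRZ [[0,1,3,8], [0,2,3,4], [0,3,5,6], [0,3,7,10], [0,3,9,13], [0,3,11,12], [1,2,3,6], [1,3,4,5], [1,3,7,9], [1,3,10,12], [1,3,11,13], [2,3,5,10], [2,3,7,11], [2,3,8,9], [2,3,12,13], [3,4,6,11], [3,4,7,13], [3,4,8,12], [3,4,9,10], [3,5,7,12], [3,5,8,13], [3,5,9,11], [3,6,7,8], [3,6,9,12], [3,6,10,13], [3,8,10,11]],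
  FRZ [[0,1,4,6], [0,2,3,4], [0,4,5,12], [0,4,7,11], [0,4,8,9], [0,4,10,13], [1,2,4,9], [1,3,4,5], [1,4,7,10], [1,4,8,11], [1,4,12,13], [2,4,5,6], [2,4,7,12], [2,4,8,10], [2,4,11,13], [3,4,6,11], [3,4,7,13], [3,4,8,12], [3,4,9,10], [4,5,7,8], [4,5,9,13], [4,5,10,11], [4,6,7,9], [4,6,8,13], [4,6,10,12], [4,9,11,12]],
  FRZ [[0,1,2,5], [0,3,5,6], [0,4,5,12], [0,5,7,9], [0,5,8,10], [0,5,11,13], [1,3,4,5], [1,5,6,13], [1,5,7,11], [1,5,8,12], [1,5,9,10], [2,3,5,10], [2,4,5,6], [2,5,7,13], [2,5,8,11], [2,5,9,12], [3,5,7,12], [3,5,8,13], [3,5,9,11], [4,5,7,8], [4,5,9,13], [4,5,10,11], [5,6,7,10], [5,6,8,9], [5,6,11,12], [5,10,12,13]],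
  FRZ [[0,1,4,6], [0,2,6,7], [0,3,5,6], [0,6,8,11], [0,6,9,10], [0,6,12,13], [1,2,3,6], [1,5,6,13], [1,6,7,12], [1,6,8,10], [1,6,9,11], [2,4,5,6], [2,6,8,12], [2,6,9,13], [2,6,10,11], [3,4,6,11], [3,6,7,8], [3,6,9,12], [3,6,10,13], [4,6,7,9], [4,6,8,13], [4,6,10,12], [5,6,7,10], [5,6,8,9], [5,6,11,12], [6,7,11,13]],
  FRZ [[0,1,7,13], [0,2,6,7], [0,3,7,10], [0,4,7,11], [0,5,7,9], [0,7,8,12], [1,2,7,8], [1,3,7,9], [1,4,7,10], [1,5,7,11], [1,6,7,12], [2,3,7,11], [2,4,7,12], [2,5,7,13], [2,7,9,10], [3,4,7,13], [3,5,7,12], [3,6,7,8], [4,5,7,8], [4,6,7,9], [5,6,7,10], [6,7,11,13], [7,8,9,11], [7,8,10,13], [7,9,12,13], [7,10,11,12]],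
  FRZ [[0,1,3,8], [0,2,8,13], [0,4,8,9], [0,5,8,10], [0,6,8,11], [0,7,8,12], [1,2,7,8], [1,4,8,11], [1,5,8,12], [1,6,8,10], [1,8,9,13], [2,3,8,9], [2,4,8,10], [2,5,8,11], [2,6,8,12], [3,4,8,12], [3,5,8,13], [3,6,7,8], [3,8,10,11], [4,5,7,8], [4,6,8,13], [5,6,8,9], [7,8,9,11], [7,8,10,13], [8,9,10,12], [8,11,12,13]],
  FRZ [[0,1,9,12], [0,2,9,11], [0,3,9,13], [0,4,8,9], [0,5,7,9], [0,6,9,10], [1,2,4,9], [1,3,7,9], [1,5,9,10], [1,6,9,11], [1,8,9,13], [2,3,8,9], [2,5,9,12], [2,6,9,13], [2,7,9,10], [3,4,9,10], [3,5,9,11], [3,6,9,12], [4,5,9,13], [4,6,7,9], [4,9,11,12], [5,6,8,9], [7,8,9,11], [7,9,12,13], [8,9,10,12], [9,10,11,13]],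
  FRZ [[0,1,10,11], [0,2,10,12], [0,3,7,10], [0,4,10,13], [0,5,8,10], [0,6,9,10], [1,2,10,13], [1,3,10,12], [1,4,7,10], [1,5,9,10], [1,6,8,10], [2,3,5,10], [2,4,8,10], [2,6,10,11], [2,7,9,10], [3,4,9,10], [3,6,10,13], [3,8,10,11], [4,5,10,11], [4,6,10,12], [5,6,7,10], [5,10,12,13], [7,8,10,13], [7,10,11,12], [8,9,10,12], [9,10,11,13]],
  FRZ [[0,1,10,11], [0,2,9,11], [0,3,11,12], [0,4,7,11], [0,5,11,13], [0,6,8,11], [1,2,11,12], [1,3,11,13], [1,4,8,11], [1,5,7,11], [1,6,9,11], [2,3,7,11], [2,4,11,13], [2,5,8,11], [2,6,10,11], [3,4,6,11], [3,5,9,11], [3,8,10,11], [4,5,10,11], [4,9,11,12], [5,6,11,12], [6,7,11,13], [7,8,9,11], [7,10,11,12], [8,11,12,13], [9,10,11,13]],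
  FRZ [[0,1,9,12], [0,2,10,12], [0,3,11,12], [0,4,5,12], [0,6,12,13], [0,7,8,12], [1,2,11,12], [1,3,10,12], [1,4,12,13], [1,5,8,12], [1,6,7,12], [2,3,12,13], [2,4,7,12], [2,5,9,12], [2,6,8,12], [3,4,8,12], [3,5,7,12], [3,6,9,12], [4,6,10,12], [4,9,11,12], [5,6,11,12], [5,10,12,13], [7,9,12,13], [7,10,11,12], [8,9,10,12], [8,11,12,13]],
  FRZ [[0,1,7,13], [0,2,8,13], [0,3,9,13], [0,4,10,13], [0,5,11,13], [0,6,12,13], [1,2,10,13], [1,3,11,13], [1,4,12,13], [1,5,6,13], [1,8,9,13], [2,3,12,13], [2,4,11,13], [2,5,7,13], [2,6,9,13], [3,4,7,13], [3,5,8,13], [3,6,10,13], [4,5,9,13], [4,6,8,13], [5,10,12,13], [6,7,11,13], [7,8,10,13], [7,9,12,13], [8,11,12,13], [9,10,11,13]]]"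

lemma PL_0: "PL ! 0 = [6,8,7,4,11,5,3,12,10,13,1,0,2,9]" by (simp add: PL_def)

lemma PL_1: "PL ! 1 = [11,7,8,13,4,1,2,12,3,10,5,9,6,0]" by (simp add: PL_def)

lemma PL_1s: "PL ! Suc 0 = [11,7,8,13,4,1,2,12,3,10,5,9,6,0]" by (simp add: PL_def)

lemma PL_2: "PL ! 2 = [4,8,3,10,0,7,11,12,2,5,6,1,13,9]" by (simp add: PL_def)

lemma PL_3: "PL ! 3 = [6,7,10,3,5,4,0,13,12,11,1,9,8,2]" by (simp add: PL_def)

lemma PL_4: "PL ! 4 = [8,9,1,7,6,12,0,11,13,2,5,3,10,4]" by (simp add: PL_def)

lemma PL_5: "PL ! 5 = [11,1,5,12,7,10,0,4,6,13,3,8,9,2]" by (simp add: PL_def)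

lemma PL_6: "PL ! 6 = [13,8,12,10,2,9,7,4,5,1,3,11,6,0]" by (simp add: PL_def)

lemma PL_7: "PL ! 7 = [8,5,13,0,1,4,12,10,11,9,3,2,7,6]" by (simp add: PL_def)

lemma PL_8: "PL ! 8 = [10,2,9,4,0,8,5,11,1,3,7,6,13,12]" by (simp add: PL_def)

lemma PL_9: "PL ! 9 = [3,6,4,1,10,8,2,11,12,5,13,9,0,7]" by (simp add: PL_def)

lemma PL_10: "PL ! 10 = [12,4,2,5,9,13,1,11,10,0,6,3,7,8]" by (simp add: PL_def)

definition PBK :: "nat list list list list" where
  "PBK = [[FRZ [], FRZ [[0,1,2,5], [0,1,3,8], [0,1,4,6], [0,1,7,13], [0,1,9,12], [0,1,10,11]], FRZ [[0,1,2,5], [0,2,3,4], [0,2,6,7], [0,2,8,13], [0,2,9,11], [0,2,10,12]], FRZ [[0,1,3,8], [0,2,3,4], [0,3,5,6], [0,3,7,10], [0,3,9,13], [0,3,11,12]], FRZ [[0,1,4,6], [0,2,3,4], [0,4,5,12], [0,4,7,11], [0,4,8,9], [0,4,10,13]], FRZ [[0,1,2,5], [0,3,5,6], [0,4,5,12], [0,5,7,9], [0,5,8,10], [0,5,11,13]], FRZ [[0,1,4,6], [0,2,6,7], [0,3,5,6], [0,6,8,11], [0,6,9,10], [0,6,12,13]], FRZ [[0,1,7,13], [0,2,6,7], [0,3,7,10], [0,4,7,11], [0,5,7,9], [0,7,8,12]], FRZ [[0,1,3,8], [0,2,8,13], [0,4,8,9], [0,5,8,10], [0,6,8,11], [0,7,8,12]],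 FRZ [[0,1,9,12], [0,2,9,11], [0,3,9,13], [0,4,8,9], [0,5,7,9], [0,6,9,10]], FRZ [[0,1,10,11], [0,2,10,12], [0,3,7,10], [0,4,10,13], [0,5,8,10], [0,6,9,10]], FRZ [[0,1,10,11], [0,2,9,11], [0,3,11,12], [0,4,7,11], [0,5,11,13], [0,6,8,11]], FRZ [[0,1,9,12], [0,2,10,12], [0,3,11,12], [0,4,5,12], [0,6,12,13], [0,7,8,12]], FRZ [[0,1,7,13], [0,2,8,13], [0,3,9,13], [0,4,10,13], [0,5,11,13], [0,6,12,13]]],
  [FRZ [], FRZ [], FRZ [[0,1,2,5], [1,2,3,6], [1,2,4,9], [1,2,7,8], [1,2,10,13], [1,2,11,12]], FRZ [[0,1,3,8], [1,2,3,6], [1,3,4,5], [1,3,7,9], [1,3,10,12], [1,3,11,13]], FRZ [[0,1,4,6], [1,2,4,9], [1,3,4,5], [1,4,7,10], [1,4,8,11], [1,4,12,13]], FRZ [[0,1,2,5], [1,3,4,5], [1,5,6,13], [1,5,7,11], [1,5,8,12], [1,5,9,10]], FRZ [[0,1,4,6], [1,2,3,6], [1,5,6,13], [1,6,7,12], [1,6,8,10], [1,6,9,11]], FRZ [[0,1,7,13], [1,2,7,8], [1,3,7,9], [1,4,7,10], [1,5,7,11], [1,6,7,12]], FRZ [[0,1,3,8], [1,2,7,8], [1,4,8,11], [1,5,8,12], [1,6,8,10], [1,8,9,13]], FRZ [[0,1,9,12], [1,2,4,9], [1,3,7,9], [1,5,9,10], [1,6,9,11], [1,8,9,13]], FRZ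 [[0,1,10,11], [1,2,10,13], [1,3,10,12], [1,4,7,10], [1,5,9,10], [1,6,8,10]], FRZ [[0,1,10,11], [1,2,11,12], [1,3,11,13], [1,4,8,11], [1,5,7,11], [1,6,9,11]], FRZ [[0,1,9,12], [1,2,11,12], [1,3,10,12], [1,4,12,13], [1,5,8,12], [1,6,7,12]], FRZ [[0,1,7,13], [1,2,10,13], [1,3,11,13], [1,4,12,13], [1,5,6,13], [1,8,9,13]]],
  [FRZ [], FRZ [], FRZ [], FRZ [[0,2,3,4], [1,2,3,6], [2,3,5,10], [2,3,7,11], [2,3,8,9], [2,3,12,13]], FRZ [[0,2,3,4], [1,2,4,9], [2,4,5,6], [2,4,7,12], [2,4,8,10], [2,4,11,13]], FRZ [[0,1,2,5], [2,3,5,10], [2,4,5,6], [2,5,7,13], [2,5,8,11], [2,5,9,12]], FRZ [[0,2,6,7], [1,2,3,6], [2,4,5,6], [2,6,8,12], [2,6,9,13], [2,6,10,11]], FRZ [[0,2,6,7], [1,2,7,8], [2,3,7,11], [2,4,7,12], [2,5,7,13], [2,7,9,10]], FRZ [[0,2,8,13], [1,2,7,8], [2,3,8,9], [2,4,8,10], [2,5,8,11], [2,6,8,12]], FRZ [[0,2,9,11], [1,2,4,9], [2,3,8,9], [2,5,9,12], [2,6,9,13], [2,7,9,10]], FRZ [[0,2,10,12], [1,2,10,13], [2,3,5,10], [2,4,8,10], [2,6,10,11], [2,7,9,10]], FRZ [[0,2,9,11], [1,2,11,12], [2,3,7,11], [2,4,11,13], [2,5,8,11], [2,6,10,11]], FRZ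 [[0,2,10,12], [1,2,11,12], [2,3,12,13], [2,4,7,12], [2,5,9,12], [2,6,8,12]], FRZ [[0,2,8,13], [1,2,10,13], [2,3,12,13], [2,4,11,13], [2,5,7,13], [2,6,9,13]]],
  [FRZ [], FRZ [], FRZ [], FRZ [], FRZ [[0,2,3,4], [1,3,4,5], [3,4,6,11], [3,4,7,13], [3,4,8,12], [3,4,9,10]], FRZ [[0,3,5,6], [1,3,4,5], [2,3,5,10], [3,5,7,12], [3,5,8,13], [3,5,9,11]], FRZ [[0,3,5,6], [1,2,3,6], [3,4,6,11], [3,6,7,8], [3,6,9,12], [3,6,10,13]], FRZ [[0,3,7,10], [1,3,7,9], [2,3,7,11], [3,4,7,13], [3,5,7,12], [3,6,7,8]], FRZ [[0,1,3,8], [2,3,8,9], [3,4,8,12], [3,5,8,13], [3,6,7,8], [3,8,10,11]], FRZ [[0,3,9,13], [1,3,7,9], [2,3,8,9], [3,4,9,10], [3,5,9,11], [3,6,9,12]], FRZ [[0,3,7,10], [1,3,10,12], [2,3,5,10], [3,4,9,10], [3,6,10,13], [3,8,10,11]], FRZ [[0,3,11,12], [1,3,11,13], [2,3,7,11], [3,4,6,11], [3,5,9,11], [3,8,10,11]], FRZ [[0,3,11,12], [1,3,10,12], [2,3,12,13], [3,4,8,12], [3,5,7,12], [3,6,9,12]], FRZ [[0,3,9,13], [1,3,11,13], [2,3,12,13], [3,4,7,13], [3,5,8,13], [3,6,10,13]]],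
  [FRZ [], FRZ [], FRZ [], FRZ [], FRZ [], FRZ [[0,4,5,12], [1,3,4,5], [2,4,5,6], [4,5,7,8], [4,5,9,13], [4,5,10,11]], FRZ [[0,1,4,6], [2,4,5,6], [3,4,6,11], [4,6,7,9], [4,6,8,13], [4,6,10,12]], FRZ [[0,4,7,11], [1,4,7,10], [2,4,7,12], [3,4,7,13], [4,5,7,8], [4,6,7,9]], FRZ [[0,4,8,9], [1,4,8,11], [2,4,8,10], [3,4,8,12], [4,5,7,8], [4,6,8,13]], FRZ [[0,4,8,9], [1,2,4,9], [3,4,9,10], [4,5,9,13], [4,6,7,9], [4,9,11,12]], FRZ [[0,4,10,13], [1,4,7,10], [2,4,8,10], [3,4,9,10], [4,5,10,11], [4,6,10,12]], FRZ [[0,4,7,11], [1,4,8,11], [2,4,11,13], [3,4,6,11], [4,5,10,11], [4,9,11,12]], FRZ [[0,4,5,12], [1,4,12,13], [2,4,7,12], [3,4,8,12], [4,6,10,12], [4,9,11,12]], FRZ [[0,4,10,13], [1,4,12,13], [2,4,11,13], [3,4,7,13], [4,5,9,13], [4,6,8,13]]],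
  [FRZ [], FRZ [], FRZ [], FRZ [], FRZ [], FRZ [], FRZ [[0,3,5,6], [1,5,6,13], [2,4,5,6], [5,6,7,10], [5,6,8,9], [5,6,11,12]], FRZ [[0,5,7,9], [1,5,7,11], [2,5,7,13], [3,5,7,12], [4,5,7,8], [5,6,7,10]], FRZ [[0,5,8,10], [1,5,8,12], [2,5,8,11], [3,5,8,13], [4,5,7,8], [5,6,8,9]], FRZ [[0,5,7,9], [1,5,9,10], [2,5,9,12], [3,5,9,11], [4,5,9,13], [5,6,8,9]], FRZ [[0,5,8,10], [1,5,9,10], [2,3,5,10], [4,5,10,11], [5,6,7,10], [5,10,12,13]], FRZ [[0,5,11,13], [1,5,7,11], [2,5,8,11], [3,5,9,11], [4,5,10,11], [5,6,11,12]], FRZ [[0,4,5,12], [1,5,8,12], [2,5,9,12], [3,5,7,12], [5,6,11,12], [5,10,12,13]], FRZ [[0,5,11,13], [1,5,6,13], [2,5,7,13], [3,5,8,13], [4,5,9,13], [5,10,12,13]]],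
  [FRZ [], FRZ [], FRZ [], FRZ [], FRZ [], FRZ [], FRZ [], FRZ [[0,2,6,7], [1,6,7,12], [3,6,7,8], [4,6,7,9], [5,6,7,10], [6,7,11,13]], FRZ [[0,6,8,11], [1,6,8,10], [2,6,8,12], [3,6,7,8], [4,6,8,13], [5,6,8,9]], FRZ [[0,6,9,10], [1,6,9,11], [2,6,9,13], [3,6,9,12], [4,6,7,9], [5,6,8,9]], FRZ [[0,6,9,10], [1,6,8,10], [2,6,10,11], [3,6,10,13], [4,6,10,12], [5,6,7,10]], FRZ [[0,6,8,11], [1,6,9,11], [2,6,10,11], [3,4,6,11], [5,6,11,12], [6,7,11,13]], FRZ [[0,6,12,13], [1,6,7,12], [2,6,8,12], [3,6,9,12], [4,6,10,12], [5,6,11,12]], FRZ [[0,6,12,13], [1,5,6,13], [2,6,9,13], [3,6,10,13], [4,6,8,13], [6,7,11,13]]],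
  [FRZ [], FRZ [], FRZ [], FRZ [], FRZ [], FRZ [], FRZ [], FRZ [], FRZ [[0,7,8,12], [1,2,7,8], [3,6,7,8], [4,5,7,8], [7,8,9,11], [7,8,10,13]], FRZ [[0,5,7,9], [1,3,7,9], [2,7,9,10], [4,6,7,9], [7,8,9,11], [7,9,12,13]], FRZ [[0,3,7,10], [1,4,7,10], [2,7,9,10], [5,6,7,10], [7,8,10,13], [7,10,11,12]], FRZ [[0,4,7,11], [1,5,7,11], [2,3,7,11], [6,7,11,13], [7,8,9,11], [7,10,11,12]], FRZ [[0,7,8,12], [1,6,7,12], [2,4,7,12], [3,5,7,12], [7,9,12,13], [7,10,11,12]], FRZ [[0,1,7,13], [2,5,7,13], [3,4,7,13], [6,7,11,13], [7,8,10,13], [7,9,12,13]]],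
  [FRZ [], FRZ [], FRZ [], FRZ [], FRZ [], FRZ [], FRZ [], FRZ [], FRZ [], FRZ [[0,4,8,9], [1,8,9,13], [2,3,8,9], [5,6,8,9], [7,8,9,11], [8,9,10,12]], FRZ [[0,5,8,10], [1,6,8,10], [2,4,8,10], [3,8,10,11], [7,8,10,13], [8,9,10,12]], FRZ [[0,6,8,11], [1,4,8,11], [2,5,8,11], [3,8,10,11], [7,8,9,11], [8,11,12,13]], FRZ [[0,7,8,12], [1,5,8,12], [2,6,8,12], [3,4,8,12], [8,9,10,12], [8,11,12,13]], FRZ [[0,2,8,13], [1,8,9,13], [3,5,8,13], [4,6,8,13], [7,8,10,13], [8,11,12,13]]],
  [FRZ [], FRZ [], FRZ [], FRZ [], FRZ [], FRZ [], FRZ [], FRZ [], FRZ [], FRZ [], FRZ [[0,6,9,10], [1,5,9,10], [2,7,9,10], [3,4,9,10], [8,9,10,12], [9,10,11,13]], FRZ [[0,2,9,11], [1,6,9,11], [3,5,9,11], [4,9,11,12], [7,8,9,11], [9,10,11,13]], FRZ [[0,1,9,12], [2,5,9,12], [3,6,9,12], [4,9,11,12], [7,9,12,13], [8,9,10,12]], FRZ [[0,3,9,13], [1,8,9,13], [2,6,9,13], [4,5,9,13], [7,9,12,13], [9,10,11,13]]],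
  [FRZ [], FRZ [], FRZ [], FRZ [], FRZ [], FRZ [], FRZ [], FRZ [], FRZ [], FRZ [], FRZ [], FRZ [[0,1,10,11], [2,6,10,11], [3,8,10,11], [4,5,10,11], [7,10,11,12], [9,10,11,13]], FRZ [[0,2,10,12], [1,3,10,12], [4,6,10,12], [5,10,12,13], [7,10,11,12], [8,9,10,12]], FRZ [[0,4,10,13], [1,2,10,13], [3,6,10,13], [5,10,12,13], [7,8,10,13], [9,10,11,13]]],
  [FRZ [], FRZ [], FRZ [], FRZ [], FRZ [], FRZ [], FRZ [], FRZ [], FRZ [], FRZ [], FRZ [], FRZ [], FRZ [[0,3,11,12], [1,2,11,12], [4,9,11,12], [5,6,11,12], [7,10,11,12], [8,11,12,13]], FRZ [[0,5,11,13], [1,3,11,13], [2,4,11,13], [6,7,11,13], [8,11,12,13], [9,10,11,13]]],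
  [FRZ [], FRZ [], FRZ [], FRZ [], FRZ [], FRZ [], FRZ [], FRZ [], FRZ [], FRZ [], FRZ [], FRZ [], FRZ [], FRZ [[0,6,12,13], [1,4,12,13], [2,3,12,13], [5,10,12,13], [7,9,12,13], [8,11,12,13]]],
  [FRZ [], FRZ [], FRZ [], FRZ [], FRZ [], FRZ [], FRZ [], FRZ [], FRZ [], FRZ [], FRZ [], FRZ [], FRZ [], FRZ []]]"

lemma BL0F: "FRZ BL0 = FRZ [[0,1,2,5], [0,1,3,8], [0,1,4,6], [0,1,7,13], [0,1,9,12], [0,1,10,11], [0,2,3,4], [0,2,6,7], [0,2,8,13], [0,2,9,11], [0,2,10,12], [0,3,5,6], [0,3,7,10], [0,3,9,13], [0,3,11,12], [0,4,5,12], [0,4,7,11], [0,4,8,9], [0,4,10,13], [0,5,7,9], [0,5,8,10], [0,5,11,13], [0,6,8,11], [0,6,9,10], [0,6,12,13], [0,7,8,12], [1,2,3,6], [1,2,4,9], [1,2,7,8], [1,2,10,13], [1,2,11,12], [1,3,4,5], [1,3,7,9], [1,3,10,12], [1,3,11,13], [1,4,7,10], [1,4,8,11], [1,4,12,13], [1,5,6,13], [1,5,7,11], [1,5,8,12], [1,5,9,10], [1,6,7,12], [1,6,8,10], [1,6,9,11], [1,8,9,13], [2,3,5,10], [2,3,7,11], [2,3,8,9], [2,3,12,13], [2,4,5,6], [2,4,7,12], [2,4,8,10], [2,4,11,13], [2,5,7,13], [2,5,8,11], [2,5,9,12], [2,6,8,12], [2,6,9,13], [2,6,10,11], [2,7,9,10],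 [3,4,6,11], [3,4,7,13], [3,4,8,12], [3,4,9,10], [3,5,7,12], [3,5,8,13], [3,5,9,11], [3,6,7,8], [3,6,9,12], [3,6,10,13], [3,8,10,11], [4,5,7,8], [4,5,9,13], [4,5,10,11], [4,6,7,9], [4,6,8,13], [4,6,10,12], [4,9,11,12], [5,6,7,10], [5,6,8,9], [5,6,11,12], [5,10,12,13], [6,7,11,13], [7,8,9,11], [7,8,10,13], [7,9,12,13], [7,10,11,12], [8,9,10,12], [8,11,12,13], [9,10,11,13]]"
  unfolding BL0_def ..

definition LV0 :: "nat list list" where
  "LV0 = [FRZ [0],
  FRZ [0,0],
  FRZ [0],
  FRZ [0],
  FRZ [0,0],
  FRZ [0,0],
  FRZ [0],
  FRZ [0],
  FRZ [0],
  FRZ [0,0],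
  FRZ [0]]"

definition LV1 :: "nat list list" where
  "LV1 = [FRZ [7,7,8,8,5,2,1,3,5,6,6,4,4,1,2,3],
  FRZ [5,3,6,1,7,5,2,8,4,6,2,4],
  FRZ [5,5,4,6,7,2,1,8,4,1,8,3,6,7,2,6],
  FRZ [7,7,8,8,4,4,6,5,5,1,2,6,3,2,2,3],
  FRZ [2,8,5,3,7,3,6,2,4,1,8,7],
  FRZ [2,6,1,3,8,5,3,6,5,1,8,1],
  FRZ [6,4,3,2,8,7,1,8,7,3,1,5,4,5,6,2],
  FRZ [7,3,2,5,3,4,8,6,1,8,7,4,1,2,5,3],
  FRZ [3,3,6,2,8,1,4,7,6,2,5,1,4,5,8,4],
  FRZ [4,4,7,7,7,5,5,2,3,6,8,1],
  FRZ [5,3,8,4,1,7,1,7,4,8,3,6,6,1,2,7]]"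

definition LV2 :: "nat list list" where
  "LV2 = [FRZ [68,67,66,79,68,64,65,69,66,74,59,46,58,55,57,56,39,38,37,77,75,74,73,78,76,74,48,47,59,49,28,58,37,29,28,19],
  FRZ [74,76,73,79,78,37,69,29,49,19,39,57,67,75,77,76,79,73,74,75,56,64,68,46,19,38,65,28,57,48,46,59,65,39,66,58,48,68,28,64,69,55],
  FRZ [48,46,59,49,77,68,59,47,48,39,67,38,73,64,74,75,66,56,57,38,37,76,39,58,19,28,75,55,28,64,79,74,79,66,65,29],
  FRZ [79,64,66,65,67,69,69,68,64,78,76,78,77,77,73,73,75,39,56,57,48,28,19,58,49,49,37,37,38,59,55,46,46,28,29,29],
  FRZ [64,58,19,47,56,73,78,76,67,66,49,37,46,38,79,75,78,69,67,68,46,57,55,48,65,47,38,29,19,79,77,73,55,28,37,59,39,59,48,58,57,49],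
  FRZ [56,65,38,78,58,49,77,79,67,64,37,28,68,56,74,47,38,29,47,65,38,19,58,59,69,57,69,73,79,76,66,67,75,76,64,39,68,48,49,67,66,39],
  FRZ [75,46,65,77,55,67,49,19,66,48,47,58,78,29,59,37,47,67,57,73,69,38,74,56,64,75,28,46,65,76,75,68,55,58,39,79],
  FRZ [59,55,56,69,78,19,76,46,37,64,29,49,79,55,56,55,78,58,57,69,28,47,74,38,68,48,77,39,73,47,65,49,66,67,79,76],
  FRZ [39,46,67,59,77,49,68,64,73,74,29,75,66,28,57,66,29,57,77,68,55,64,65,56,58,76,46,47,19,37,78,69,69,74,79,65],
  FRZ [67,38,37,58,76,58,76,39,37,68,65,64,69,66,47,47,48,46,77,77,48,59,29,74,19,56,19,74,56,29,78,57,75,28,55,57,28,73,75,55,73,78],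
  FRZ [48,59,47,57,29,56,69,55,38,74,48,59,68,49,77,47,49,77,46,29,75,66,39,39,78,78,56,67,19,65,19,79,38,37,73,76]]"

definition LV3 :: "nat list list" where
  "LV3 = [FRZ [717,586,716,715,712,614,624,623,622,604,605,606,697,676,434,694,696,706,703,705,687,442,534,532,444,443,424,505,353,524,515,262],
  FRZ [696,614,532,524,595,703,695,717,707,697,704,714,685,434,535,606,616,343,514,443,424,533,515,353,596,523,625,604],
  FRZ [697,614,442,444,616,694,424,613,707,695,434,626,523,262,717,715,525,685,343,706,605,625,622,704,596,676,703,505,705,515,624,623],
  FRZ [716,715,714,713,625,605,606,626,614,615,586,595,685,677,686,687,704,705,695,667,443,532,523,525,524,444,534,533,514,505,424,434],
  FRZ [713,353,696,626,514,667,596,533,697,352,704,686,677,695,586,623,515,716,687,676,706,615,625,595,613,622,606,442],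
  FRZ [667,434,532,624,687,505,704,713,677,262,424,596,703,707,705,534,622,514,523,535,696,613,352,716,694,685,442,433],
  FRZ [515,352,686,712,626,444,595,716,706,505,615,525,717,667,443,433,624,353,707,713,685,534,262,596,697,704,604,694,533,616,622,343],
  FRZ [525,676,695,605,615,625,705,524,515,626,534,707,535,442,712,596,262,586,667,343,694,613,433,604,352,614,686,677,696,687,714,606],
  FRZ [434,514,714,343,623,706,534,352,433,444,696,615,676,687,353,443,667,717,424,616,533,535,707,712,523,505,703,604,524,605,686,715],
  FRZ [616,605,606,715,443,444,697,535,442,353,343,525,626,716,613,623,586,713,712,714,595,624,717,533,532,433,677,703],
  FRZ [694,616,352,714,706,586,433,615,532,535,613,695,614,624,525,514,705,676,677,262,595,524,622,523,623,625,713,685,686,715,712,604]]"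

definition LV4 :: "nat list list" where
  "LV4 = [FRZ [6428,5638,5536,6365,6175,4726],
  FRZ [6445,6094,6437,6357,3997,5637,5608],
  FRZ [4817,4807,6447,5455,6185,6418],
  FRZ [6454,5545,5618,6367,6265,3178],
  FRZ [5546,3907,4717,6436,6456,6364,4818],
  FRZ [5636,4727,6275,5446,6457,6427,5547],
  FRZ [6266,6346,6438,4816,5527,5627],
  FRZ [4798,6355,5617,6455,3998,6448],
  FRZ [5365,6347,5628,5635,6274,6446],
  FRZ [5626,6356,6184,5537,6256,6366,4636],
  FRZ [4808,6276,6458,3988,5456,6337]]"

fun code :: "nat list \<Rightarrow> nat" where
  "code [] = 0"
| "code (x # xs) = Suc x + 9 * code xs"

definition prm :: "nat \<Rightarrow> nat \<Rightarrow> nat" where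
  "prm j x = (if x < 14 then PL ! j ! x else x)"

definition key :: "nat \<Rightarrow> nat list \<Rightarrow> nat" where
  "key j l = code (sort (filter (\<lambda>x. x < 8) (map (prm j) l)))"

lemma cntP_Nil: "length (filter P (FRZ [])) = 0"
  by (simp add: FRZ_def)

lemma cntP_Cons: "length (filter P (FRZ (x # xs))) =
    (if P x then Suc (length (filter P (FRZ xs))) else length (filter P (FRZ xs)))"
  by (simp add: FRZ_def)

lemma cnt_Nil: "count_list (FRZ []) y = 0"
  by (simp add: FRZ_def)

lemma cnt_Cons: "count_list (FRZ (x # xs)) y =
    (if x = y then Suc (count_list (FRZ xs) y) else count_list (FRZ xs) y)"
  by (simp add: FRZ_def)

definition fcons :: "'a \<Rightarrow> 'a list \<Rightarrow> 'a list" where "fcons x xs = x # xs"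

definition ffilt :: "('a \<Rightarrow> bool) \<Rightarrow> 'a list \<Rightarrow> 'a list" where "ffilt P xs = filter P xs"

lemma fcons_FRZ: "fcons x (FRZ xs) = FRZ (x # xs)"
  by (simp add: fcons_def FRZ_def)

lemma ffilt_Nil: "ffilt P (FRZ []) = FRZ []"
  by (simp add: ffilt_def FRZ_def)

lemma ffilt_Cons: "ffilt P (FRZ (x # xs)) = (if P x then fcons x (ffilt P (FRZ xs)) else ffilt P (FRZ xs))"
  by (simp add: ffilt_def FRZ_def fcons_def)

lemma list_all_True2: "list_all (\<lambda>x. True) xs"
  by (induction xs) auto
lemma sqs_image:
  assumes S: "steiner_system t k Q B" and p: "p permutes Q"
  shows "steiner_system t k Q ((\<lambda>b. p ` b) ` B)"
proof -
  have inj: "inj p" using p by (rule permutes_inj)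
  have injv: "inj (inv p)" using permutes_inv[OF p] by (rule permutes_inj)
  have fin: "finite Q" using S by (simp add: steiner_system_def)
  have blk: "\<forall>b\<in>B. b \<subseteq> Q \<and> card b = k" using S by (simp add: steiner_system_def)
  have uq: "\<And>T. T \<subseteq> Q \<Longrightarrow> card T = t \<Longrightarrow> \<exists>!b. b \<in> B \<and> T \<subseteq> b"
    using S by (simp add: steiner_system_def)
  have pQ: "p ` Q = Q" using p by (rule permutes_image)
  have vQ: "inv p ` Q = Q" using permutes_inv[OF p] by (rule permutes_image)
  have ii: "\<And>X. inv p ` p ` X = X" by (simp add: image_comp permutes_inv_o(2)[OF p])
  have ff: "\<And>X. p ` inv p ` X = X" by (simp add: image_comp permutes_inv_o(1)[OF p])
  have part2: "\<forall>b'\<in>(\<lambda>b. p ` b) ` B. b' \<subseteq> Q \<and> card b' = k"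
  proof
    fix b' assume "b' \<in> (\<lambda>b. p ` b) ` B"
    then obtain b where b: "b \<in> B" "b' = p ` b" by auto
    show "b' \<subseteq> Q \<and> card b' = k"
      using blk b pQ card_image[OF inj_on_subset[OF inj subset_UNIV, of b]] by auto
  qed
  have part3: "\<exists>!b'. b' \<in> (\<lambda>b. p ` b) ` B \<and> T \<subseteq> b'" if T: "T \<subseteq> Q \<and> card T = t" for T
  proof -
    let ?T = "inv p ` T"
    have T1: "?T \<subseteq> Q" using T vQ by auto
    have T2: "card ?T = t" using T card_image[OF inj_on_subset[OF injv subset_UNIV, of T]] by simp
    obtain b where b: "b \<in> B" "?T \<subseteq> b" using uq[OF T1 T2] by auto
    have u: "\<And>c. c \<in> B \<Longrightarrow> ?T \<subseteq> c \<Longrightarrow> c = b" using uq[OF T1 T2] b by auto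
    show "\<exists>!b'. b' \<in> (\<lambda>b. p ` b) ` B \<and> T \<subseteq> b'"
    proof (rule ex1I[of _ "p ` b"])
      have "T = p ` ?T" using ff by simp
      also have "\<dots> \<subseteq> p ` b" using b by blast
      finally show "p ` b \<in> (\<lambda>b. p ` b) ` B \<and> T \<subseteq> p ` b" using b by blast
    next
      fix b' assume h: "b' \<in> (\<lambda>b. p ` b) ` B \<and> T \<subseteq> b'"
      then obtain c where c: "c \<in> B" "b' = p ` c" by auto
      have "?T \<subseteq> inv p ` p ` c" using h c by blast
      then have "?T \<subseteq> c" using ii by simp
      then show "b' = p ` b" using u c by simp
    qed
  qed
  show ?thesis unfolding steiner_system_def using fin part2 part3 by blast
qed

lemma orbit_sum:
  fixes A K :: "'a set" and g :: "'a set \<Rightarrow> nat"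
  assumes finA: "finite A"
  shows "card ((\<lambda>p. p ` K) ` {p. p permutes A}) * (\<Sum>p\<in>{p. p permutes A}. g (p ` K))
       = card {p. p permutes A} * (\<Sum>X\<in>(\<lambda>p. p ` K) ` {p. p permutes A}. g X)"
proof -
  define P where "P = {p. p permutes A}"
  define Orb where "Orb = (\<lambda>p. p ` K) ` P"
  define c where "c = card {p\<in>P. p ` K = K}"
  have finP: "finite P" unfolding P_def using finA by (rule finite_permutations)
  have fib: "card {p\<in>P. p ` K = X} = c" if X: "X \<in> Orb" for X
  proof -
    obtain s where s: "s \<in> P" "X = s ` K" using X unfolding Orb_def by auto
    have sp: "s permutes A" using s unfolding P_def by simp
    have "{p\<in>P. p ` K = X} = (\<lambda>q. s \<circ> q) ` {q\<in>P. q ` K = K}"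
    proof (intro equalityI subsetI)
      fix p assume "p \<in> {p\<in>P. p ` K = X}"
      then have p: "p permutes A" "p ` K = s ` K" using s unfolding P_def by auto
      define q where "q = inv s \<circ> p"
      have "q permutes A" unfolding q_def by (rule permutes_compose[OF p(1) permutes_inv[OF sp]])
      moreover have "q ` K = K"
      proof -
        have "q ` K = inv s ` (p ` K)" unfolding q_def by (simp add: image_comp)
        also have "\<dots> = inv s ` s ` K" using p(2) by simp
        also have "\<dots> = K" by (simp add: image_comp permutes_inv_o(2)[OF sp])
        finally show ?thesis .
      qed
      moreover have "p = s \<circ> q" unfolding q_def by (simp add: o_assoc permutes_inv_o(1)[OF sp])
      ultimately show "p \<in> (\<lambda>q. s \<circ> q) ` {q\<in>P. q ` K = K}" unfolding P_def by blast
    next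
      fix p assume "p \<in> (\<lambda>q. s \<circ> q) ` {q\<in>P. q ` K = K}"
      then obtain q where q: "q permutes A" "q ` K = K" "p = s \<circ> q" unfolding P_def by auto
      have "p permutes A" using q permutes_compose[OF q(1) sp] by simp
      moreover have "p ` K = X"
      proof -
        have "p ` K = s ` (q ` K)" using q(3) by (simp add: image_comp)
        then show ?thesis using q(2) s(2) by simp
      qed
      ultimately show "p \<in> {p\<in>P. p ` K = X}" unfolding P_def by simp
    qed
    moreover have "inj_on (\<lambda>q. s \<circ> q) {q\<in>P. q ` K = K}"
    proof (rule inj_onI)
      fix q1 q2 assume "s \<circ> q1 = s \<circ> q2"
      then have "inv s \<circ> (s \<circ> q1) = inv s \<circ> (s \<circ> q2)" by simp
      then have "(inv s \<circ> s) \<circ> q1 = (inv s \<circ> s) \<circ> q2" by (simp only: o_assoc)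
      then show "q1 = q2" by (simp add: permutes_inv_o(2)[OF sp])
    qed
    ultimately show ?thesis unfolding c_def by (simp add: card_image)
  qed
  have sum1: "(\<Sum>p\<in>P. g (p ` K)) = (\<Sum>X\<in>Orb. (\<Sum>p\<in>{p\<in>P. p ` K = X}. g (p ` K)))"
    unfolding Orb_def by (rule sum.image_gen[OF finP])
  also have "\<dots> = (\<Sum>X\<in>Orb. c * g X)"
  proof (rule sum.cong[OF refl])
    fix X assume "X \<in> Orb"
    have "(\<Sum>p\<in>{p\<in>P. p ` K = X}. g (p ` K)) = (\<Sum>p\<in>{p\<in>P. p ` K = X}. g X)" by simp
    also have "\<dots> = card {p\<in>P. p ` K = X} * g X" by simp
    finally show "(\<Sum>p\<in>{p\<in>P. p ` K = X}. g (p ` K)) = c * g X" using fib[OF \<open>X \<in> Orb\<close>] by simp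
  qed
  finally have S1: "(\<Sum>p\<in>P. g (p ` K)) = c * (\<Sum>X\<in>Orb. g X)" by (simp add: sum_distrib_left)
  have "card P = (\<Sum>p\<in>P. 1)" by simp
  also have "\<dots> = (\<Sum>X\<in>Orb. (\<Sum>p\<in>{p\<in>P. p ` K = X}. 1))"
    unfolding Orb_def by (rule sum.image_gen[OF finP])
  also have "\<dots> = (\<Sum>X\<in>Orb. c)" using fib by (intro sum.cong) auto
  finally have S2: "card P = c * card Orb" by simp
  show ?thesis using S1 S2 unfolding P_def[symmetric] Orb_def[symmetric] by simp
qed
lemma card_decomp: "finite K \<Longrightarrow> card K = card (K - A) + card (K \<inter> A)"
proof -
  assume finK: "finite K"
  have "card K = card ((K - A) \<union> (K \<inter> A))" by (simp add: Un_Diff_Int)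
  also have "\<dots> = card (K - A) + card (K \<inter> A)" by (rule card_Un_disjoint) (use finK in auto)
  finally show ?thesis .
qed

lemma orbit_char:
  assumes finA: "finite A" and finK: "finite K"
  shows "(\<lambda>p. p ` K) ` {p. p permutes A} = {X. finite X \<and> X - A = K - A \<and> card (X \<inter> A) = card (K \<inter> A)}"
proof (intro equalityI subsetI)
  fix X assume "X \<in> (\<lambda>p. p ` K) ` {p. p permutes A}"
  then obtain p where p: "p permutes A" "X = p ` K" by auto
  have inj: "inj p" using p(1) by (rule permutes_inj)
  have "p ` K - A = K - A"
  proof (intro equalityI subsetI)
    fix x assume "x \<in> p ` K - A"
    then obtain y where y: "y \<in> K" "x = p y" "p y \<notin> A" by auto
    then have "y \<notin> A" using permutes_in_image[OF p(1)] by simp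
    then have "p y = y" using permutes_not_in[OF p(1)] by simp
    then show "x \<in> K - A" using y \<open>y \<notin> A\<close> by simp
  next
    fix x assume x: "x \<in> K - A"
    then have "p x = x" using permutes_not_in[OF p(1)] by simp
    then show "x \<in> p ` K - A" using x by (metis DiffD1 DiffD2 DiffI image_eqI)
  qed
  moreover have "p ` K \<inter> A = p ` (K \<inter> A)"
    using permutes_in_image[OF p(1)] by auto
  moreover have "card (p ` (K \<inter> A)) = card (K \<inter> A)"
    by (rule card_image[OF inj_on_subset[OF inj subset_UNIV]])
  ultimately show "X \<in> {X. finite X \<and> X - A = K - A \<and> card (X \<inter> A) = card (K \<inter> A)}"
    using p finK by simp
next
  fix X assume "X \<in> {X. finite X \<and> X - A = K - A \<and> card (X \<inter> A) = card (K \<inter> A)}"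
  then have X: "finite X" "X - A = K - A" "card (X \<inter> A) = card (K \<inter> A)" by auto
  obtain h where h: "bij_betw h (K \<inter> A) (X \<inter> A)"
    using finite_same_card_bij[of "K \<inter> A" "X \<inter> A"] X finK by auto
  have "card (A - K) = card (A - X)"
    using X(3) finA by (simp add: card_Diff_subset_Int Int_commute)
  then obtain g where g: "bij_betw g (A - K) (A - X)"
    using finite_same_card_bij[of "A - K" "A - X"] finA by auto
  define s where "s = (\<lambda>x. if x \<in> K \<inter> A then h x else if x \<in> A then g x else x)"
  have s1: "bij_betw s (K \<inter> A) (X \<inter> A)"
    using h by (rule bij_betw_cong[THEN iffD1, rotated]) (simp add: s_def)
  have s2: "bij_betw s (A - K) (A - X)"
    using g by (rule bij_betw_cong[THEN iffD1, rotated]) (auto simp: s_def)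
  have s3: "bij_betw s ((K \<inter> A) \<union> (A - K)) ((X \<inter> A) \<union> (A - X))"
    by (rule bij_betw_combine[OF s1 s2]) auto
  have eqA1: "(K \<inter> A) \<union> (A - K) = A" by auto
  have eqA2: "(X \<inter> A) \<union> (A - X) = A" by auto
  have sp: "s permutes A"
    by (rule bij_imp_permutes) (use s3 eqA1 eqA2 in simp, simp add: s_def)
  have "s ` K = s ` (K \<inter> A) \<union> s ` (K - A)" by auto
  also have "s ` (K \<inter> A) = X \<inter> A" using s1 by (simp add: bij_betw_def)
  also have "s ` (K - A) = K - A" by (auto simp: s_def)
  finally have "s ` K = X" using X(2) by auto
  then show "X \<in> (\<lambda>p. p ` K) ` {p. p permutes A}" using sp by blast
qed

lemma orbit_card:
  assumes finA: "finite A" and finK: "finite K"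
  shows "card {X. finite X \<and> X - A = K - A \<and> card (X \<inter> A) = card (K \<inter> A)} = card A choose card (K \<inter> A)"
proof -
  let ?m = "card (K \<inter> A)"
  have "{X. finite X \<and> X - A = K - A \<and> card (X \<inter> A) = ?m} = (\<lambda>Y. (K - A) \<union> Y) ` {Y. Y \<subseteq> A \<and> card Y = ?m}"
  proof (intro equalityI subsetI)
    fix X assume "X \<in> {X. finite X \<and> X - A = K - A \<and> card (X \<inter> A) = ?m}"
    then have X: "finite X" "X - A = K - A" "card (X \<inter> A) = ?m" by auto
    have "X = (K - A) \<union> (X \<inter> A)" using X(2) by blast
    then show "X \<in> (\<lambda>Y. (K - A) \<union> Y) ` {Y. Y \<subseteq> A \<and> card Y = ?m}" using X(3) by blast
  next
    fix X assume "X \<in> (\<lambda>Y. (K - A) \<union> Y) ` {Y. Y \<subseteq> A \<and> card Y = ?m}"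
    then obtain Y where Y: "Y \<subseteq> A" "card Y = ?m" "X = (K - A) \<union> Y" by auto
    have "finite Y" using Y(1) finA finite_subset by blast
    moreover have "X - A = K - A" using Y by auto
    moreover have "X \<inter> A = Y" using Y by auto
    ultimately show "X \<in> {X. finite X \<and> X - A = K - A \<and> card (X \<inter> A) = ?m}" using Y finK by auto
  qed
  moreover have "inj_on (\<lambda>Y. (K - A) \<union> Y) {Y. Y \<subseteq> A \<and> card Y = ?m}"
  proof (rule inj_onI)
    fix Y1 Y2 assume "Y1 \<in> {Y. Y \<subseteq> A \<and> card Y = ?m}" "Y2 \<in> {Y. Y \<subseteq> A \<and> card Y = ?m}"
      "(K - A) \<union> Y1 = (K - A) \<union> Y2"
    then show "Y1 = Y2" by blast
  qed
  ultimately show ?thesis using n_subsets[OF finA, of ?m] by (simp add: card_image)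
qed

lemma card_filter_sum:
  assumes "finite A"
  shows "card {x\<in>A. P x} = (\<Sum>x\<in>A. if P x then 1 else 0)"
  using assms by (simp add: sum.If_cases Int_def)

lemma count_family:
  fixes sys :: "nat \<Rightarrow> 'a set set"
  assumes finA: "finite A" and finK: "finite K"
  and blocks: "\<And>j b. j < n \<Longrightarrow> b \<in> sys j \<Longrightarrow> finite b \<and> card b = card K"
  and finS: "\<And>j. j < n \<Longrightarrow> finite (sys j)"
  and cond: "(\<Sum>j<n. card {b \<in> sys j. b - A = K - A}) = card A choose card (K \<inter> A)"
  shows "size (filter_mset (\<lambda>B. K \<in> B) (\<Sum>j<n. image_mset (\<lambda>p. (\<lambda>b. p ` b) ` sys j) (mset_set {p. p permutes A})))
         = card {p. p permutes A}"
proof -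
  define P where "P = {p. p permutes A}"
  define Orb where "Orb = (\<lambda>p. p ` K) ` P"
  define f where "f X = card {j \<in> {..<n}. X \<in> sys j}" for X
  have finP: "finite P" unfolding P_def using finA by (rule finite_permutations)
  have step1: "\<And>m. size (filter_mset (\<lambda>B. K \<in> B) (\<Sum>j<m. image_mset (\<lambda>p. (\<lambda>b. p ` b) ` sys j) (mset_set P)))
      = (\<Sum>j<m. size (filter_mset (\<lambda>B. K \<in> B) (image_mset (\<lambda>p. (\<lambda>b. p ` b) ` sys j) (mset_set P))))"
    by (induct_tac m) auto
  have step2: "size (filter_mset (\<lambda>B. K \<in> B) (image_mset (\<lambda>p. (\<lambda>b. p ` b) ` sys j) (mset_set P)))
      = card {p\<in>P. p ` K \<in> sys j}" for j
  proof -
    have "size (filter_mset (\<lambda>B. K \<in> B) (image_mset (\<lambda>p. (\<lambda>b. p ` b) ` sys j) (mset_set P)))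
        = card {p\<in>P. K \<in> (\<lambda>b. p ` b) ` sys j}"
      using finP by (simp add: filter_mset_image_mset)
    also have "{p\<in>P. K \<in> (\<lambda>b. p ` b) ` sys j} = inv ` {q\<in>P. q ` K \<in> sys j}"
    proof (intro equalityI subsetI)
      fix p assume "p \<in> {p\<in>P. K \<in> (\<lambda>b. p ` b) ` sys j}"
      then obtain b where p: "p permutes A" "b \<in> sys j" "K = p ` b" unfolding P_def by auto
      have "inv p ` K = b" using p(3) by (simp add: image_comp permutes_inv_o(2)[OF p(1)])
      moreover have "inv p \<in> P" using permutes_inv[OF p(1)] unfolding P_def by simp
      moreover have "p = inv (inv p)" using permutes_inv_inv[OF p(1)] by simp
      ultimately show "p \<in> inv ` {q\<in>P. q ` K \<in> sys j}" using p(2) by blast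
    next
      fix p assume "p \<in> inv ` {q\<in>P. q ` K \<in> sys j}"
      then obtain q where q: "q permutes A" "q ` K \<in> sys j" "p = inv q" unfolding P_def by auto
      have "p ` (q ` K) = K" using q(3) by (simp add: image_comp permutes_inv_o(2)[OF q(1)])
      moreover have "p \<in> P" using permutes_inv[OF q(1)] q(3) unfolding P_def by simp
      ultimately show "p \<in> {p\<in>P. K \<in> (\<lambda>b. p ` b) ` sys j}" using q(2) by (metis (mono_tags, lifting) image_eqI mem_Collect_eq)
    qed
    also have "card (inv ` {q\<in>P. q ` K \<in> sys j}) = card {q\<in>P. q ` K \<in> sys j}"
    proof (rule card_image, rule inj_onI)
      fix p q assume "p \<in> {q\<in>P. q ` K \<in> sys j}" "q \<in> {q\<in>P. q ` K \<in> sys j}" "inv p = inv q"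
      then show "p = q" unfolding P_def by (metis (mono_tags, lifting) mem_Collect_eq permutes_inv_inv)
    qed
    finally show ?thesis .
  qed
  have step4: "(\<Sum>j<n. card {p\<in>P. p ` K \<in> sys j}) = (\<Sum>p\<in>P. f (p ` K))"
  proof -
    have "(\<Sum>j<n. card {p\<in>P. p ` K \<in> sys j}) = (\<Sum>j<n. \<Sum>p\<in>P. if p ` K \<in> sys j then 1 else 0)"
      using finP by (simp add: card_filter_sum)
    also have "\<dots> = (\<Sum>p\<in>P. \<Sum>j<n. if p ` K \<in> sys j then 1 else 0)" by (rule sum.swap)
    also have "\<dots> = (\<Sum>p\<in>P. f (p ` K))" unfolding f_def
      by (rule sum.cong[OF refl], rule card_filter_sum[symmetric], simp)
    finally show ?thesis .
  qed
  have step5: "card Orb * (\<Sum>p\<in>P. f (p ` K)) = card P * (\<Sum>X\<in>Orb. f X)"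
    unfolding Orb_def P_def by (rule orbit_sum[OF finA])
  have OrbEq: "Orb = {X. finite X \<and> X - A = K - A \<and> card (X \<inter> A) = card (K \<inter> A)}"
    unfolding Orb_def P_def by (rule orbit_char[OF finA finK])
  have cardOrb: "card Orb = card A choose card (K \<inter> A)"
    unfolding OrbEq by (rule orbit_card[OF finA finK])
  have finOrb: "finite Orb" unfolding Orb_def using finP by simp
  have step6: "(\<Sum>X\<in>Orb. f X) = (\<Sum>j<n. card {b \<in> sys j. b - A = K - A})"
  proof -
    have "(\<Sum>X\<in>Orb. f X) = (\<Sum>X\<in>Orb. \<Sum>j<n. if X \<in> sys j then 1 else 0)"
      unfolding f_def by (rule sum.cong[OF refl], rule card_filter_sum, simp)
    also have "\<dots> = (\<Sum>j<n. \<Sum>X\<in>Orb. if X \<in> sys j then 1 else 0)" by (rule sum.swap)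
    also have "\<dots> = (\<Sum>j<n. card {X\<in>Orb. X \<in> sys j})"
      by (rule sum.cong[OF refl], rule card_filter_sum[OF finOrb, symmetric])
    also have "\<dots> = (\<Sum>j<n. card {b \<in> sys j. b - A = K - A})"
    proof (rule sum.cong[OF refl])
      fix j assume j: "j \<in> {..<n}"
      have "{X\<in>Orb. X \<in> sys j} = {b \<in> sys j. b - A = K - A}"
      proof (intro equalityI subsetI)
        fix X assume "X \<in> {X\<in>Orb. X \<in> sys j}" then show "X \<in> {b \<in> sys j. b - A = K - A}"
          unfolding OrbEq by simp
      next
        fix b assume b: "b \<in> {b \<in> sys j. b - A = K - A}"
        then have b1: "finite b" "card b = card K" using blocks j by auto
        have "card b = card (b - A) + card (b \<inter> A)" using b1(1) by (rule card_decomp) 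
        moreover have "card K = card (K - A) + card (K \<inter> A)" using finK by (rule card_decomp)
        ultimately have "card (b \<inter> A) = card (K \<inter> A)" using b b1 by simp
        then show "b \<in> {X\<in>Orb. X \<in> sys j}" unfolding OrbEq using b b1 by simp
      qed
      then show "card {X\<in>Orb. X \<in> sys j} = card {b \<in> sys j. b - A = K - A}"
        by simp
    qed
    finally show ?thesis .
  qed
  have pos: "card Orb > 0"
  proof -
    have "id ` K \<in> Orb" unfolding Orb_def P_def using permutes_id[of A] by blast
    then have "K \<in> Orb" by simp
    then show ?thesis using finOrb card_gt_0_iff by blast
  qed
  have "card Orb * (\<Sum>p\<in>P. f (p ` K)) = card P * (\<Sum>X\<in>Orb. f X)" by (rule step5)
  also have "\<dots> = card P * card Orb" using step6 cond cardOrb by simp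
  finally have "card Orb * (\<Sum>p\<in>P. f (p ` K)) = card P * card Orb" .
  then have "(\<Sum>p\<in>P. f (p ` K)) = card P" using pos by (simp add: mult.commute)
  then show ?thesis unfolding P_def[symmetric] using step1 step2 step4 by simp
qed
lemma upt14: "[0..<14] = [0,1,2,3,4,5,6,7,8,9,10,11,12,13::nat]"
  by (simp add: upt_rec)

lemma upt11: "[0..<11] = [0,1,2,3,4,5,6,7,8,9,10::nat]"
  by (simp add: upt_rec)

lemma upt8: "[0..<8] = [0,1,2,3,4,5,6,7::nat]"
  by (simp add: upt_rec)

definition c1chk :: "nat list \<Rightarrow> bool" where
  "c1chk l = (sorted_wrt (<) l \<and> length l = 4 \<and> list_all (\<lambda>x. x < 14) l)"

lemma C1: "list_all c1chk BL0"
  by (simp add: BL0_def c1chk_def)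

definition c5chk :: "nat \<Rightarrow> bool" where
  "c5chk j = (length (PL ! j) = 14 \<and> distinct (PL ! j) \<and> list_all (\<lambda>x. x < 14) (PL ! j))"

lemma C5: "list_all c5chk [0..<11]"
  unfolding upt11 by (simp add: PL_def c5chk_def)

definition bkchk :: "nat \<Rightarrow> bool" where "bkchk a = (ffilt (\<lambda>l. a \<in> set l) (FRZ BL0) = BK ! a)"

lemma C3: "list_all bkchk [0..<14]"
  unfolding upt14 by (simp add: bkchk_def BL0F BK_def ffilt_Nil ffilt_Cons fcons_FRZ; simp add: FRZ_def)

definition pchk :: "nat \<Rightarrow> nat \<Rightarrow> bool" where
  "pchk a b = (if a < b then ffilt (\<lambda>l. b \<in> set l) (BK ! a) = PBK ! a ! b else True)"

definition prow :: "nat \<Rightarrow> bool" where "prow a = list_all (pchk a) [0..<14]"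

lemma C3b: "list_all prow [0..<14]"
  unfolding upt14 by (simp add: prow_def upt14 pchk_def BK_def PBK_def ffilt_Nil ffilt_Cons fcons_FRZ; simp add: FRZ_def)

definition tchk :: "nat \<Rightarrow> nat \<Rightarrow> nat \<Rightarrow> bool" where
  "tchk a b c = (if a < b \<and> b < c then length (filter (\<lambda>l. c \<in> set l) (PBK ! a ! b)) = 1 else True)"

definition trow :: "nat \<Rightarrow> nat \<Rightarrow> bool" where "trow a b = list_all (tchk a b) [0..<14]"

definition tblk :: "nat \<Rightarrow> bool" where "tblk a = list_all (trow a) [0..<14]"

lemma C4: "list_all tblk [0..<14]"
  unfolding upt14 by (simp add: tblk_def trow_def upt14 tchk_def PBK_def cntP_Nil cntP_Cons)

lemma kj_0: "map (key 0) BL0 = [717,68,67,7,66,586,716,715,79,712,6428,5638,614,68,5536,624,64,7,65,69,623,622,604,605,606,66,697,8,8,74,676,59,5,434,46,2,1,3,58,55,57,56,39,38,37,0,6365,694,77,696,706,75,74,73,78,703,705,687,76,6175,74,442,5,48,47,534,59,532,49,444,443,424,6,6,505,4,4,353,28,524,58,4726,515,37,1,2,3,262,29,28,19]"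
  by (simp add: BL0_def key_def prm_def PL_0)

lemma kj_1: "map (key 1) BL0 = [74,76,696,73,79,78,5,3,37,0,69,29,6,1,7,614,5,49,532,2,524,19,39,57,595,67,75,77,76,703,79,695,8,717,73,707,697,6445,6094,74,6437,704,714,6357,75,685,56,0,4,64,434,68,535,46,19,38,65,606,28,57,6,48,46,616,59,65,343,2,39,66,514,58,443,424,533,48,3997,5637,68,515,353,596,5608,28,4,523,64,69,625,604,55]"
  by (simp add: BL0_def key_def prm_def PL_1 PL_1s)

lemma kj_2: "map (key 2) BL0 = [697,48,46,5,59,614,442,49,444,4817,616,77,68,59,47,694,424,4807,613,707,6447,695,434,626,5,48,4,523,39,67,38,73,6,7,2,64,262,1,8,74,75,717,0,66,56,57,715,38,525,4,685,37,5455,343,76,6185,706,39,58,605,625,19,1,28,622,8,75,704,3,6,7,596,676,703,6418,55,28,64,505,79,705,74,79,2,515,66,6,65,624,29,623]"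
  by (simp add: BL0_def key_def prm_def PL_2)

lemma kj_3: "map (key 3) BL0 = [716,715,6454,714,79,713,625,64,66,7,65,5545,605,606,67,626,69,69,5618,68,614,615,64,586,595,7,685,78,8,677,8,6367,76,686,687,704,78,705,6265,77,77,695,73,667,73,75,443,4,4,39,532,6,56,57,48,5,5,1,28,19,2,523,525,58,524,49,444,49,37,37,3178,38,59,534,533,55,514,505,6,424,46,46,434,28,0,29,3,2,2,3,29]"
  by (simp add: BL0_def key_def prm_def PL_3)

lemma kj_4: "map (key 4) BL0 = [2,8,64,5,3,58,713,19,47,353,56,73,78,696,76,7,67,66,626,3,6,49,37,514,46,0,667,596,2,533,38,79,75,78,697,69,67,68,46,4,0,57,1,55,352,48,704,686,677,695,586,65,623,5546,47,38,29,19,3907,4717,515,6436,716,79,6456,8,77,687,73,676,6364,706,7,615,625,595,613,622,606,55,28,37,59,442,39,59,48,58,57,49,4818]"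
  by (simp add: BL0_def key_def prm_def PL_4)

lemma kj_5: "map (key 5) BL0 = [56,65,667,434,2,38,78,532,624,6,58,1,49,3,0,8,77,79,687,5,67,3,64,37,28,68,505,704,5636,4727,56,74,47,38,29,6275,713,677,262,47,65,38,424,5446,19,596,58,59,69,57,703,707,6457,705,534,69,6,622,514,523,535,73,696,79,76,5,66,0,613,1,352,67,716,75,76,694,6427,685,8,442,64,1,39,433,68,5547,48,49,67,66,39]"
  by (simp add: BL0_def key_def prm_def PL_5)

lemma kj_6: "map (key 6) BL0 = [0,6,75,46,65,4,3,77,55,2,67,8,49,19,7,66,48,515,352,47,58,1,78,686,712,626,8,29,59,37,7,3,47,67,1,444,57,595,73,5,69,38,716,706,74,505,4,5,56,64,75,615,525,28,46,6,65,717,667,76,443,75,433,624,353,68,55,2,707,713,685,58,534,262,39,6266,6346,6438,596,697,704,79,604,694,533,4816,5527,616,5627,622,343]"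
  by (simp add: BL0_def key_def prm_def PL_6)

lemma kj_7: "map (key 7) BL0 = [59,55,56,69,78,525,19,0,7,3,76,46,37,64,676,695,29,2,605,5,49,615,3,4,79,8,55,56,6,625,705,4798,55,6355,5617,524,515,6455,626,534,707,535,78,58,57,69,442,28,1,712,47,74,38,596,68,48,77,8,7,39,4,262,586,667,343,694,613,433,1,73,604,352,47,614,3998,2,65,686,677,49,5,696,6448,66,3,67,79,687,76,714,606]"
  by (simp add: BL0_def key_def prm_def PL_7)

lemma kj_8: "map (key 8) BL0 = [3,434,514,3,39,714,46,6,2,67,8,59,77,49,68,1,64,343,73,4,74,7,623,706,6,2,534,352,29,75,66,433,444,696,615,676,5365,28,57,66,29,687,57,6347,5628,353,77,68,443,5,55,1,667,64,0,65,4,56,58,717,76,5635,46,424,6274,5,47,616,533,535,707,6446,19,37,712,523,505,703,604,78,524,69,8,69,605,74,4,79,686,65,715]"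
  by (simp add: BL0_def key_def prm_def PL_8)

lemma kj_9: "map (key 9) BL0 = [616,605,606,715,5626,67,443,444,697,535,442,353,38,6356,343,37,4,58,76,58,4,76,39,525,6184,37,5537,626,68,716,613,65,623,586,713,7,7,712,714,7,64,69,595,66,624,717,47,47,533,6256,48,46,5,77,77,5,532,433,6366,48,59,29,74,19,56,19,74,56,29,4636,677,2,0,78,0,57,75,28,55,3,57,28,73,75,6,8,703,1,55,73,78]"
  by (simp add: BL0_def key_def prm_def PL_9)

lemma kj_10: "map (key 10) BL0 = [48,59,47,5,694,616,57,29,3,352,714,56,69,55,706,8,4,1,7,1,7,4,38,586,74,8,4808,433,48,615,6276,59,532,6458,535,68,49,77,47,49,77,613,695,614,3988,46,624,525,514,705,29,75,66,39,3,39,676,677,262,5456,595,524,6,78,622,78,6,523,56,6337,623,625,0,1,67,19,2,713,685,65,19,686,79,38,37,7,73,715,712,76,604]"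
  by (simp add: BL0_def key_def prm_def PL_10)

lemma KJ_0: "KJ ! 0 = map (key 0) BL0"
  unfolding kj_0 by (simp add: KJ_def FRZ_def)

lemma KJ_1: "KJ ! 1 = map (key 1) BL0"
  unfolding kj_1 by (simp add: KJ_def FRZ_def)

lemma KJ_2: "KJ ! 2 = map (key 2) BL0"
  unfolding kj_2 by (simp add: KJ_def FRZ_def)

lemma KJ_3: "KJ ! 3 = map (key 3) BL0"
  unfolding kj_3 by (simp add: KJ_def FRZ_def)

lemma KJ_4: "KJ ! 4 = map (key 4) BL0"
  unfolding kj_4 by (simp add: KJ_def FRZ_def)

lemma KJ_5: "KJ ! 5 = map (key 5) BL0"
  unfolding kj_5 by (simp add: KJ_def FRZ_def)

lemma KJ_6: "KJ ! 6 = map (key 6) BL0"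
  unfolding kj_6 by (simp add: KJ_def FRZ_def)

lemma KJ_7: "KJ ! 7 = map (key 7) BL0"
  unfolding kj_7 by (simp add: KJ_def FRZ_def)

lemma KJ_8: "KJ ! 8 = map (key 8) BL0"
  unfolding kj_8 by (simp add: KJ_def FRZ_def)

lemma KJ_9: "KJ ! 9 = map (key 9) BL0"
  unfolding kj_9 by (simp add: KJ_def FRZ_def)

lemma KJ_10: "KJ ! 10 = map (key 10) BL0"
  unfolding kj_10 by (simp add: KJ_def FRZ_def)

lemma LVeq0: "map (\<lambda>k. ffilt (\<lambda>x. 0 \<le> x \<and> x < 1) k) KJ = LV0"
  by (simp add: KJ_def LV0_def ffilt_Nil ffilt_Cons fcons_FRZ; simp add: FRZ_def)

definition chk0 :: "nat list \<Rightarrow> bool" where "chk0 ys = (if length ys = 0 then sum_list (map (\<lambda>k. count_list k (code ys)) LV0) = 15 else True)"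

lemma C7_0: "list_all chk0 (subseqs [0..<8])"
  unfolding upt8 by (simp add: chk0_def LV0_def cnt_Nil cnt_Cons)

lemma LVeq1: "map (\<lambda>k. ffilt (\<lambda>x. 1 \<le> x \<and> x < 9) k) KJ = LV1"
  by (simp add: KJ_def LV1_def ffilt_Nil ffilt_Cons fcons_FRZ; simp add: FRZ_def)

definition chk1 :: "nat list \<Rightarrow> bool" where "chk1 ys = (if length ys = 1 then sum_list (map (\<lambda>k. count_list k (code ys)) LV1) = 20 else True)"

lemma C7_1: "list_all chk1 (subseqs [0..<8])"
  unfolding upt8 by (simp add: chk1_def LV1_def cnt_Nil cnt_Cons)

lemma LVeq2: "map (\<lambda>k. ffilt (\<lambda>x. 9 \<le> x \<and> x < 81) k) KJ = LV2"
  by (simp add: KJ_def LV2_def ffilt_Nil ffilt_Cons fcons_FRZ; simp add: FRZ_def)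

definition chk2 :: "nat list \<Rightarrow> bool" where "chk2 ys = (if length ys = 2 then sum_list (map (\<lambda>k. count_list k (code ys)) LV2) = 15 else True)"

lemma C7_2: "list_all chk2 (subseqs [0..<8])"
  unfolding upt8 by (simp add: chk2_def LV2_def cnt_Nil cnt_Cons)

lemma LVeq3: "map (\<lambda>k. ffilt (\<lambda>x. 81 \<le> x \<and> x < 729) k) KJ = LV3"
  by (simp add: KJ_def LV3_def ffilt_Nil ffilt_Cons fcons_FRZ; simp add: FRZ_def)

definition chk3 :: "nat list \<Rightarrow> bool" where "chk3 ys = (if length ys = 3 then sum_list (map (\<lambda>k. count_list k (code ys)) LV3) = 6 else True)"

lemma C7_3: "list_all chk3 (subseqs [0..<8])"
  unfolding upt8 by (simp add: chk3_def LV3_def cnt_Nil cnt_Cons)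

lemma LVeq4: "map (\<lambda>k. ffilt (\<lambda>x. 729 \<le> x \<and> x < 6561) k) KJ = LV4"
  by (simp add: KJ_def LV4_def ffilt_Nil ffilt_Cons fcons_FRZ; simp add: FRZ_def)

definition chk4 :: "nat list \<Rightarrow> bool" where "chk4 ys = (if length ys = 4 then sum_list (map (\<lambda>k. count_list k (code ys)) LV4) = 1 else True)"

lemma C7_4: "list_all chk4 (subseqs [0..<8])"
  unfolding upt8 by (simp add: chk4_def LV4_def cnt_Nil cnt_Cons)

lemma C6: "j < 11 \<Longrightarrow> KJ ! j = map (key j) BL0"
proof -
  assume "j < 11"
  then have "j \<in> set [0..<11]" by simp
  then have "j \<in> set [0,1,2,3,4,5,6,7,8,9,10]" by (simp only: upt11)
  then have "j = 0 \<or> j = 1 \<or> j = 2 \<or> j = 3 \<or> j = 4 \<or> j = 5 \<or> j = 6 \<or> j = 7 \<or> j = 8 \<or> j = 9 \<or> j = 10"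
    by (simp only: list.set insert_iff empty_iff simp_thms)
  then show ?thesis
    by (elim disjE, simp_all only: KJ_0 KJ_1 KJ_2 KJ_3 KJ_4 KJ_5 KJ_6 KJ_7 KJ_8 KJ_9 KJ_10)
qed

lemma code_lt: "\<forall>x\<in>set ys. x < 8 \<Longrightarrow> code ys < 9 ^ length ys"
proof (induction ys)
  case Nil then show ?case by simp
next
  case (Cons x xs)
  then have "code xs < 9 ^ length xs" "x < 8" by auto
  then show ?case by simp
qed

lemma code_ge: "ys \<noteq> [] \<Longrightarrow> 9 ^ (length ys - 1) \<le> code ys"
proof (induction ys)
  case Nil then show ?case by simp
next
  case (Cons x xs)
  show ?case
  proof (cases "xs = []")
    case True then show ?thesis by simp
  next
    case False
    then have "9 ^ (length xs - 1) \<le> code xs" using Cons.IH by simp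
    then have "9 * 9 ^ (length xs - 1) \<le> 9 * code xs" by simp
    moreover have "(9::nat) * 9 ^ (length xs - 1) = 9 ^ length xs" using False
      by (cases xs) auto
    ultimately show ?thesis by simp
  qed
qed

lemma count_filter_same: "R c \<Longrightarrow> count_list (filter R xs) c = count_list xs c"
  by (induction xs) auto

lemma lv_step:
  assumes "map (ffilt R) KJ = LV" "R c"
  shows "sum_list (map (\<lambda>k. count_list k c) KJ) = sum_list (map (\<lambda>k. count_list k c) LV)"
proof -
  have "LV = map (filter R) KJ" using assms(1) unfolding ffilt_def[abs_def] by simp
  then show ?thesis using count_filter_same[of R c, OF assms(2)] by (simp add: o_def)
qed

lemma c7_all:
  assumes ys: "ys \<in> set (subseqs [0..<8])" "\<forall>y\<in>set ys. y < 8" and len: "length ys \<le> 4"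
  shows "sum_list (map (\<lambda>k. count_list k (code ys)) KJ) = [15,20,15,6,1] ! length ys"
proof -
  have lt: "code ys < 9 ^ length ys" using code_lt[OF ys(2)] .
  have ge: "ys \<noteq> [] \<Longrightarrow> 9 ^ (length ys - 1) \<le> code ys" by (rule code_ge)
  have cases: "length ys = 0 \<or> length ys = 1 \<or> length ys = 2 \<or> length ys = 3 \<or> length ys = 4"
  proof -
    have "length ys < 5" using len by simp
    then show ?thesis by (simp add: less_Suc_eq numeral_eq_Suc)
  qed
  have mem: "\<And>P. list_all P (subseqs [0..<8]) \<Longrightarrow> P ys" using ys(1) by (simp add: list_all_iff)
  show ?thesis
  proof -
    { assume l: "length ys = 0"
      then have "ys = []" by simp
      then have "chk0 ys" using mem[OF C7_0] by simp
      moreover have "0 \<le> code ys \<and> code ys < 1" using \<open>ys = []\<close> by simp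
      ultimately have ?thesis using lv_step[OF LVeq0] l unfolding chk0_def by simp }
    moreover
    { assume l: "length ys = 1"
      then have ne: "ys \<noteq> []" by auto
      have "chk1 ys" using l mem[OF C7_1] by simp
      moreover have "1 \<le> code ys \<and> code ys < 9" using lt ge[OF ne] l by simp
      ultimately have ?thesis using lv_step[OF LVeq1] l unfolding chk1_def by simp }
    moreover
    { assume l: "length ys = 2"
      then have ne: "ys \<noteq> []" by auto
      have "chk2 ys" using l mem[OF C7_2] by simp
      moreover have "9 \<le> code ys \<and> code ys < 81" using lt ge[OF ne] l by simp
      ultimately have ?thesis using lv_step[OF LVeq2] l unfolding chk2_def by simp }
    moreover
    { assume l: "length ys = 3"
      then have ne: "ys \<noteq> []" by auto
      have "chk3 ys" using l mem[OF C7_3] by simp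
      moreover have "81 \<le> code ys \<and> code ys < 729" using lt ge[OF ne] l by simp
      ultimately have ?thesis using lv_step[OF LVeq3] l unfolding chk3_def by simp }
    moreover
    { assume l: "length ys = 4"
      then have ne: "ys \<noteq> []" by auto
      have "chk4 ys" using l mem[OF C7_4] by simp
      moreover have "729 \<le> code ys \<and> code ys < 6561" using lt ge[OF ne] l by simp
      ultimately have ?thesis using lv_step[OF LVeq4] l unfolding chk4_def by simp }
    ultimately show ?thesis using cases by blast
  qed
qed

definition Q0 :: "nat set" where "Q0 = {0..<14}"
definition A0 :: "nat set" where "A0 = {8..<14}"
definition B0 :: "nat set set" where "B0 = set ` set BL0"
definition sys :: "nat \<Rightarrow> nat set set" where "sys j = (\<lambda>b. prm j ` b) ` B0"
definition FAM :: "nat set set multiset" where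
  "FAM = (\<Sum>j<11. image_mset (\<lambda>p. (\<lambda>b. p ` b) ` sys j) (mset_set {p. p permutes A0}))"

lemma bl_props:
  assumes "l \<in> set BL0"
  shows "sorted_wrt (<) l \<and> length l = 4 \<and> set l \<subseteq> Q0"
  using C1 assms unfolding list_all_iff Q0_def c1chk_def by auto

lemma length_filter_mono:
  assumes "\<And>x. x \<in> set xs \<Longrightarrow> P x \<Longrightarrow> R x"
  shows "length (filter P xs) \<le> length (filter R xs)"
  using assms by (induction xs) auto

lemma distinct_from_count:
  assumes "\<And>x. x \<in> set xs \<Longrightarrow> count_list xs x \<le> 1"
  shows "distinct xs"
  using assms
proof (induction xs)
  case Nil then show ?case by simp
next
  case (Cons x xs)
  have "x \<notin> set xs"
  proof
    assume "x \<in> set xs"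
    then have "count_list xs x \<noteq> 0" by (simp add: count_list_0_iff)
    then have "count_list xs x \<ge> 1" by simp
    then have "count_list (x # xs) x \<ge> 2" by simp
    then show False using Cons.prems[of x] by simp
  qed
  moreover have "distinct xs"
  proof (rule Cons.IH)
    fix y assume y: "y \<in> set xs"
    have "count_list xs y \<le> count_list (x # xs) y" by simp
    then show "count_list xs y \<le> 1" using Cons.prems[of y] y by simp
  qed
  ultimately show ?case by simp
qed

lemma triple_count:
  assumes a: "a < b" "b < c" "c < 14"
  shows "length (filter (\<lambda>l. set [a,b,c] \<subseteq> set l) BL0) = 1"
proof -
  have a14: "a < 14" "b < 14" using a by auto
  have c4: "length (filter (\<lambda>l. c \<in> set l) (PBK ! a ! b)) = 1"
    using C4 a a14 unfolding list_all_iff tblk_def trow_def tchk_def by auto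
  have c3b: "PBK ! a ! b = filter (\<lambda>l. b \<in> set l) (BK ! a)"
    using C3b a a14 unfolding list_all_iff prow_def pchk_def ffilt_def FRZ_def by auto
  have c3: "BK ! a = filter (\<lambda>l. a \<in> set l) BL0"
    using C3 a14 unfolding list_all_iff bkchk_def ffilt_def FRZ_def by auto
  have "filter (\<lambda>l. c \<in> set l) (PBK ! a ! b) = filter (\<lambda>l. set [a,b,c] \<subseteq> set l) BL0"
    unfolding c3b c3 by (simp add: filter_filter conj_commute conj_left_commute)
  then show ?thesis using c4 by simp
qed

lemma triple_count_set:
  assumes T: "T \<subseteq> Q0" "card T = 3"
  shows "length (filter (\<lambda>l. T \<subseteq> set l) BL0) = 1"
proof -
  define ts where "ts = sorted_list_of_set T"
  have finT: "finite T" using T(1) unfolding Q0_def by (simp add: finite_subset)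
  have ts: "sorted_wrt (<) ts" "set ts = T" "length ts = 3"
    using finT T(2) unfolding ts_def by (auto simp: sorted_list_of_set.strict_sorted_key_list_of_set)
  then obtain a b c where abc: "ts = [a,b,c]"
    by (metis (no_types, lifting) length_0_conv length_Suc_conv numeral_3_eq_3)
  have "a < b" "b < c" using ts(1) abc by auto
  moreover have "c < 14" using T(1) ts(2) abc unfolding Q0_def by auto
  ultimately show ?thesis using triple_count ts(2) abc by metis
qed

lemma distinct_BL0: "distinct BL0"
proof (rule distinct_from_count)
  fix l assume l: "l \<in> set BL0"
  have lp: "sorted_wrt (<) l" "length l = 4" "set l \<subseteq> Q0" using bl_props[OF l] by auto
  define T where "T = set (take 3 l)"
  have "distinct l" using lp(1) strict_sorted_iff by blast
  then have cT: "card T = 3" unfolding T_def using lp(2) by (simp add: distinct_card)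
  have sT: "T \<subseteq> set l" unfolding T_def by (meson set_take_subset)
  then have TQ: "T \<subseteq> Q0" using lp(3) by blast
  have "count_list BL0 l = length (filter ((=) l) BL0)" by (rule count_list_eq_length_filter)
  also have "\<dots> \<le> length (filter (\<lambda>l'. T \<subseteq> set l') BL0)"
    by (rule length_filter_mono) (use sT in auto)
  also have "\<dots> = 1" by (rule triple_count_set[OF TQ cT])
  finally show "count_list BL0 l \<le> 1" .
qed

lemma inj_set_BL0: "inj_on set (set BL0)"
proof (rule inj_onI)
  fix x y assume xy: "x \<in> set BL0" "y \<in> set BL0" "set x = set y"
  then show "x = y" using bl_props strict_sorted_iff sorted_distinct_set_unique by metis
qed

lemma B0_sqs: "steiner_system 3 4 Q0 B0"
  unfolding steiner_system_def
proof (intro conjI ballI allI impI)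
  show "finite Q0" unfolding Q0_def by simp
next
  fix b assume "b \<in> B0"
  then obtain l where l: "l \<in> set BL0" "b = set l" unfolding B0_def by auto
  then have "sorted_wrt (<) l" "length l = 4" "set l \<subseteq> Q0" using bl_props by auto
  then show "b \<subseteq> Q0" "card b = 4" using l strict_sorted_iff distinct_card by metis+
next
  fix T assume T: "T \<subseteq> Q0 \<and> card T = 3"
  have "length (filter (\<lambda>l. T \<subseteq> set l) BL0) = 1" using triple_count_set T by blast
  then obtain l where l: "filter (\<lambda>l. T \<subseteq> set l) BL0 = [l]"
    by (metis (no_types, lifting) One_nat_def length_0_conv length_Suc_conv)
  have "l \<in> set (filter (\<lambda>l. T \<subseteq> set l) BL0)" using l by simp
  then have l1: "l \<in> set BL0" "T \<subseteq> set l" by auto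
  show "\<exists>!b. b \<in> B0 \<and> T \<subseteq> b"
  proof (rule ex1I[of _ "set l"])
    show "set l \<in> B0 \<and> T \<subseteq> set l" using l1 unfolding B0_def by auto
  next
    fix b assume b: "b \<in> B0 \<and> T \<subseteq> b"
    then obtain l' where l': "l' \<in> set BL0" "b = set l'" unfolding B0_def by auto
    then have "l' \<in> set (filter (\<lambda>l. T \<subseteq> set l) BL0)" using b by simp
    then have "l' = l" using l by simp
    then show "b = set l" using l' by simp
  qed
qed


lemma prm_perm:
  assumes j: "j < 11"
  shows "prm j permutes Q0"
proof -
  have c5: "length (PL ! j) = 14" "distinct (PL ! j)" "\<forall>x\<in>set (PL ! j). x < 14"
    using C5 j unfolding list_all_iff c5chk_def by auto
  have inj: "inj_on (prm j) Q0"
  proof (rule inj_onI)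
    fix x y assume "x \<in> Q0" "y \<in> Q0" "prm j x = prm j y"
    then show "x = y" using c5 unfolding prm_def Q0_def by (simp add: nth_eq_iff_index_eq)
  qed
  have img: "prm j ` Q0 \<subseteq> Q0"
  proof
    fix y assume "y \<in> prm j ` Q0"
    then obtain x where x: "x \<in> Q0" "y = prm j x" by auto
    then have "y = PL ! j ! x" "x < 14" unfolding prm_def Q0_def by auto
    then show "y \<in> Q0" using c5 unfolding Q0_def by (simp add: nth_mem)
  qed
  have "prm j ` Q0 = Q0" using endo_inj_surj[OF _ img inj] unfolding Q0_def by simp
  then have "bij_betw (prm j) Q0 Q0" using inj by (simp add: bij_betw_def)
  moreover have "\<And>x. x \<notin> Q0 \<Longrightarrow> prm j x = x" unfolding prm_def Q0_def by simp
  ultimately show ?thesis by (rule bij_imp_permutes)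
qed

lemma sys_sqs: "j < 11 \<Longrightarrow> steiner_system 3 4 Q0 (sys j)"
  unfolding sys_def by (rule sqs_image[OF B0_sqs prm_perm])

lemma code_inj:
  "\<forall>x\<in>set xs. x < 8 \<Longrightarrow> \<forall>y\<in>set ys. y < 8 \<Longrightarrow> code xs = code ys \<Longrightarrow> xs = ys"
proof (induction xs arbitrary: ys)
  case Nil then show ?case by (cases ys) auto
next
  case (Cons x xs)
  show ?case
  proof (cases ys)
    case Nil then show ?thesis using Cons by simp
  next
    case (Cons y ys')
    have e: "Suc x + 9 * code xs = Suc y + 9 * code ys'" using Cons.prems Cons by simp
    have "x < 8" "y < 8" using Cons.prems Cons by auto
    then have "Suc x = Suc y" using e by presburger
    then have "x = y" "code xs = code ys'" using e by auto
    then show ?thesis using Cons.IH[of ys'] Cons.prems Cons by simp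
  qed
qed

lemma subseqs_sorted:
  "ys \<in> set (subseqs xs) \<Longrightarrow> sorted_wrt (<) xs \<Longrightarrow> sorted_wrt (<) (ys :: nat list)"
proof (induction xs arbitrary: ys)
  case Nil then show ?case by simp
next
  case (Cons x xs)
  have "ys \<in> (Cons x) ` set (subseqs xs) \<or> ys \<in> set (subseqs xs)"
    using Cons.prems(1) by (simp add: Let_def)
  then show ?case
  proof
    assume "ys \<in> (Cons x) ` set (subseqs xs)"
    then obtain zs where zs: "zs \<in> set (subseqs xs)" "ys = x # zs" by auto
    have "set zs \<in> set ` set (subseqs xs)" using zs(1) by (rule imageI)
    then have "set zs \<in> Pow (set xs)" by (simp only: subseqs_powset)
    then have "set zs \<subseteq> set xs" by simp
    then show ?thesis using zs Cons.IH[OF zs(1)] Cons.prems(2) by auto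
  next
    assume "ys \<in> set (subseqs xs)"
    then show ?thesis using Cons.IH Cons.prems(2) by simp
  qed
qed

lemma key_iff:
  assumes j: "j < 11" and l: "l \<in> set BL0" and ys: "sorted_wrt (<) ys" "\<forall>y\<in>set ys. y < 8"
  shows "(key j l = code ys) = (prm j ` set l - A0 = set ys)"
proof -
  define zs where "zs = sort (filter (\<lambda>x. x < 8) (map (prm j) l))"
  have lp: "sorted_wrt (<) l" "length l = 4" "set l \<subseteq> Q0" using bl_props[OF l] by auto
  have perm: "prm j permutes Q0" using prm_perm[OF j] .
  have dl: "distinct l" using lp(1) strict_sorted_iff by blast
  have "distinct (map (prm j) l)" using dl inj_on_subset[OF permutes_inj[OF perm] subset_UNIV] by (simp add: distinct_map)
  then have dz: "distinct zs" unfolding zs_def by simp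
  have sz: "sorted_wrt (<) zs" using dz unfolding zs_def by (simp add: strict_sorted_iff)
  have z8: "\<forall>z\<in>set zs. z < 8" unfolding zs_def by simp
  have imgQ: "prm j ` set l \<subseteq> Q0" using lp(3) permutes_image[OF perm] by blast
  have setz: "set zs = prm j ` set l - A0"
    unfolding zs_def A0_def using imgQ unfolding Q0_def by auto
  have "(key j l = code ys) = (zs = ys)"
    unfolding key_def zs_def[symmetric] using code_inj[OF z8 ys(2)] by auto
  also have "\<dots> = (set zs = set ys)"
    using sz ys(1) strict_sorted_iff sorted_distinct_set_unique by metis
  finally show ?thesis using setz by simp
qed

lemma card_sys_key:
  assumes j: "j < 11" and ys: "sorted_wrt (<) ys" "\<forall>y\<in>set ys. y < 8"
  shows "card {b \<in> sys j. b - A0 = set ys} = count_list (map (key j) BL0) (code ys)"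
proof -
  define g where "g l = prm j ` set l" for l
  have perm: "prm j permutes Q0" using prm_perm[OF j] .
  have ginj: "inj_on g (set BL0)"
  proof (rule inj_onI)
    fix x y assume xy: "x \<in> set BL0" "y \<in> set BL0" "g x = g y"
    then have "set x = set y" unfolding g_def using permutes_inj[OF perm] by (simp add: inj_image_eq_iff)
    then show "x = y" using inj_set_BL0 xy by (simp add: inj_on_def)
  qed
  have "sys j = g ` set BL0" unfolding sys_def B0_def g_def by (simp add: image_comp)
  then have "{b \<in> sys j. b - A0 = set ys} = g ` set (filter (\<lambda>l. g l - A0 = set ys) BL0)" by auto
  then have "card {b \<in> sys j. b - A0 = set ys} = card (set (filter (\<lambda>l. g l - A0 = set ys) BL0))"
    using ginj by (simp add: card_image inj_on_subset)
  also have "\<dots> = length (filter (\<lambda>l. g l - A0 = set ys) BL0)"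
    using distinct_card[OF distinct_filter[OF distinct_BL0]] by simp
  also have "filter (\<lambda>l. g l - A0 = set ys) BL0 = filter (\<lambda>l. key j l = code ys) BL0"
    unfolding g_def using key_iff[OF j _ ys] by (intro filter_cong) auto
  also have "length \<dots> = count_list (map (key j) BL0) (code ys)"
    by (simp add: count_list_eq_length_filter filter_map o_def eq_commute)
  finally show ?thesis .
qed

lemma choose_tab: "n \<le> 4 \<Longrightarrow> [15,20,15,6,1] ! n = (6 choose (4 - n) :: nat)"
  by (cases n; cases "n - 1"; cases "n - 2"; cases "n - 3"; simp add: numeral_eq_Suc)

lemma cond8:
  assumes S: "S \<subseteq> {0..<8}" "card S \<le> 4"
  shows "(\<Sum>j<11. card {b \<in> sys j. b - A0 = S}) = 6 choose (4 - card S)"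
proof -
  obtain ys where ys: "ys \<in> set (subseqs [0..<8])" "set ys = S"
    using subset_subseqs[of S "[0..<8]"] S(1) by auto
  have sy: "sorted_wrt (<) ys" using subseqs_sorted[OF ys(1)] by (simp add: sorted_wrt_upt)
  have y8: "\<forall>y\<in>set ys. y < 8" using ys(2) S(1) by auto
  have ly: "length ys = card S" using ys(2) sy strict_sorted_iff distinct_card by metis
  have c7: "sum_list (map (\<lambda>k. count_list k (code ys)) KJ) = [15,20,15,6,1] ! length ys"
    using c7_all[OF ys(1) y8] S(2) ly by simp
  have lenKJ: "length KJ = 11" unfolding KJ_def by simp
  have c6: "\<And>j. j < 11 \<Longrightarrow> KJ ! j = map (key j) BL0" by (rule C6)
  have "(\<Sum>j<11. card {b \<in> sys j. b - A0 = S}) = (\<Sum>j<11. count_list (KJ ! j) (code ys))"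
    using card_sys_key[OF _ sy y8] c6 ys(2) by simp
  also have "\<dots> = sum_list (map (\<lambda>k. count_list k (code ys)) KJ)"
    using lenKJ by (simp add: sum_list_sum_nth atLeast0LessThan)
  also have "\<dots> = 6 choose (4 - card S)" using c7 ly S(2) choose_tab by simp
  finally show ?thesis .
qed

lemma mem_sum_mset: "B \<in># (\<Sum>j<(n::nat). M j) \<Longrightarrow> \<exists>j<n. B \<in># M j"
  by (induction n) (auto simp: less_Suc_eq)

theorem corollary21:
  shows "\<exists>(Q :: nat set) F. large_set_mult 3 4 14 720 Q F"
proof (intro exI)
  have finA: "finite A0" unfolding A0_def by simp
  have cA: "card A0 = 6" unfolding A0_def by simp
  have AQ: "A0 \<subseteq> Q0" unfolding A0_def Q0_def by auto
  have cP: "card {p. p permutes A0} = 720"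
    using card_permutations[OF cA finA] by (simp add: fact_numeral)
  have part1: "finite Q0 \<and> card Q0 = 14" unfolding Q0_def by simp
  have part2: "\<forall>B\<in>#FAM. steiner_system 3 4 Q0 B"
  proof
    fix B assume "B \<in># FAM"
    then have "\<exists>j<11. B \<in># image_mset (\<lambda>p. (\<lambda>b. p ` b) ` sys j) (mset_set {p. p permutes A0})"
      unfolding FAM_def by (rule mem_sum_mset)
    then obtain j where j: "j < 11" "B \<in># image_mset (\<lambda>p. (\<lambda>b. p ` b) ` sys j) (mset_set {p. p permutes A0})"
      by blast
    have "B \<in> (\<lambda>p. (\<lambda>b. p ` b) ` sys j) ` set_mset (mset_set {p. p permutes A0})"
      using j(2) by (simp only: in_image_mset)
    then have "B \<in> (\<lambda>p. (\<lambda>b. p ` b) ` sys j) ` {p. p permutes A0}"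
      using finite_permutations[OF finA] by (simp only: finite_set_mset_mset_set)
    then obtain p where p: "p permutes A0" "B = (\<lambda>b. p ` b) ` sys j" by blast
    show "steiner_system 3 4 Q0 B"
      unfolding p(2) by (rule sqs_image[OF sys_sqs[OF j(1)] permutes_subset[OF p(1) AQ]])
  qed
  have part3: "size (filter_mset (\<lambda>B. K \<in> B) FAM) = 720" if K: "K \<subseteq> Q0" "card K = 4" for K
  proof -
    have finK: "finite K" using K(1) unfolding Q0_def by (simp add: finite_subset)
    have SK: "K - A0 \<subseteq> {0..<8}" using K(1) unfolding Q0_def A0_def by auto
    have cS: "card (K - A0) \<le> 4" using K(2) finK by (metis Diff_subset card_mono)
    have cK: "card K = card (K - A0) + card (K \<inter> A0)"
      using card_decomp[OF finK] .
    have blocks: "\<And>j b. j < 11 \<Longrightarrow> b \<in> sys j \<Longrightarrow> finite b \<and> card b = card K"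
    proof -
      fix j b assume "j < 11" "b \<in> sys j"
      then have "b \<subseteq> Q0" "card b = 4" using sys_sqs unfolding steiner_system_def by blast+
      then show "finite b \<and> card b = card K" using K(2) unfolding Q0_def by (simp add: finite_subset)
    qed
    have finS: "\<And>j. j < 11 \<Longrightarrow> finite (sys j)" unfolding sys_def B0_def by simp
    have cond: "(\<Sum>j<11. card {b \<in> sys j. b - A0 = K - A0}) = card A0 choose card (K \<inter> A0)"
    proof -
      have e: "4 - card (K - A0) = card (K \<inter> A0)" using cK K(2) by simp
      show ?thesis using cond8[OF SK cS] cA unfolding e by simp
    qed
    show ?thesis
      using count_family[OF finA finK blocks finS cond] cP unfolding FAM_def by simp
  qed
  show "large_set_mult 3 4 14 720 Q0 FAM"
    unfolding large_set_mult_def using part1 part2 part3 by blast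
qed

end
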